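(* Let $0<p<1$ and let $G\sim\mathcal{G}(n,p)$, with adjacency matrix $A$. Let $\ell\ge 2$ be an integer. Then $$\Pr\big(G \text{ has a cospectral mate with level } \ell' \text{ for some } \ell' \text{ with } \ell'\mid \ell\big)\to 0 \quad\text{as } n\to\infty.$$ In particular, $\Pr(G \text{ has a cospectral mate with level } \ell)\to 0$ as $n\to\infty$. Consequently, almost all graphs have no generalized cospectral mate with level $\ell'$ for any $\ell'\mid\ell$; in particular $$\Pr(G \text{ has a generalized cospectral mate with level } \ell)\to 0\quad\text{as } n\to\infty.$$
   Context: $\mathcal{G}(n,p)$ is the random graph on $n$ labelled vertices in which each of the $\binom n2$ possible edges is present independently with probability $p$. The adjacency matrix $A_G$ of a graph $G$ on vertex set $V$ is the $V\times V$ matrix with entry $1$ if $ij$ is an edge and $0$ otherwise. For a rational matrix $M$, its level $\ell(M)$ is the smallest positive integer $\ell$ with $\ell M$ an integer matrix. A rational orthogonal matrix is a matrix $Q$ with rational entries and $Q^\top Q=I$. Two graphs are cospectral if they are non-isomorphic and their adjacency matrices have the same multiset of eigenvalues; a graph $H$ is a cospectral mate of $G$ with level $\ell$ if $H$ is not isomorphic to $G$ and there is a rational orthogonal matrix $Q$ of level $\ell$ with $Q^\top A_G Q=A_H$. The generalized spectrum of $G$ is the spectrum of $A_G$ together with the spectrum of the adjacency matrix of the complement $\overline G$; $H$ is a generalized cospectral mate of $G$ with level $\ell$ if $H$ is non-isomorphic to $G$, has the same generalized spectrum, and $Q^\top A_G Q=A_H$ for some rational orthogonal $Q$ of level $\ell$.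 *)

theory Defs
  imports Complex_Main "Jordan_Normal_Form.Char_Poly"
begin

definition all_edges :: "nat \<Rightarrow> nat set set" where
  "all_edges n = {{i, j} | i j. i < n \<and> j < n \<and> i \<noteq> j}"

definition graphs :: "nat \<Rightarrow> nat set set set" where
  "graphs n = Pow (all_edges n)"

definition adj_mat :: "nat \<Rightarrow> nat set set \<Rightarrow> rat mat" where
  "adj_mat n E = mat n n (\<lambda>(i, j). if {i, j} \<in> E then 1 else 0)"

definition compl_graph :: "nat \<Rightarrow> nat set set \<Rightarrow> nat set set" where
  "compl_graph n E = all_edges n - E"

definition graph_iso :: "nat \<Rightarrow> nat set set \<Rightarrow> nat set set \<Rightarrow> bool" where
  "graph_iso n E F \<longleftrightarrow> (\<exists>\<sigma>. bij_betw \<sigma> {0..<n} {0..<n} \<and> F = (\<lambda>e. \<sigma> ` e) ` E)"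

text \<open>Same spectrum: same multiset of eigenvalues, i.e. equal characteristic polynomials.\<close>
definition cospectral_mats :: "rat mat \<Rightarrow> rat mat \<Rightarrow> bool" where
  "cospectral_mats A B \<longleftrightarrow> char_poly A = char_poly B"

definition rat_orthogonal :: "nat \<Rightarrow> rat mat \<Rightarrow> bool" where
  "rat_orthogonal n Q \<longleftrightarrow> Q \<in> carrier_mat n n \<and> transpose_mat Q * Q = 1\<^sub>m n"

definition level :: "nat \<Rightarrow> rat mat \<Rightarrow> nat" where
  "level n Q = (LEAST l. l > 0 \<and> (\<forall>i<n. \<forall>j<n. of_nat l * Q $$ (i, j) \<in> \<int>))"

definition cospectral_mate_level :: "nat \<Rightarrow> nat set set \<Rightarrow> nat set set \<Rightarrow> nat \<Rightarrow> bool" where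
  "cospectral_mate_level n E F l \<longleftrightarrow> F \<in> graphs n \<and> \<not> graph_iso n E F \<and>
     (\<exists>Q. rat_orthogonal n Q \<and> level n Q = l \<and>
          transpose_mat Q * adj_mat n E * Q = adj_mat n F)"

definition gen_cospectral_mate_level :: "nat \<Rightarrow> nat set set \<Rightarrow> nat set set \<Rightarrow> nat \<Rightarrow> bool" where
  "gen_cospectral_mate_level n E F l \<longleftrightarrow> F \<in> graphs n \<and> \<not> graph_iso n E F \<and>
     cospectral_mats (adj_mat n E) (adj_mat n F) \<and>
     cospectral_mats (adj_mat n (compl_graph n E)) (adj_mat n (compl_graph n F)) \<and>
     (\<exists>Q. rat_orthogonal n Q \<and> level n Q = l \<and>
          transpose_mat Q * adj_mat n E * Q = adj_mat n F)"

definition Gnp_prob :: "nat \<Rightarrow> real \<Rightarrow> (nat set set \<Rightarrow> bool) \<Rightarrow> real" where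
  "Gnp_prob n p P = (\<Sum>E\<in>graphs n. if P E then p ^ card E * (1 - p) ^ (card (all_edges n) - card E) else 0)"

end

theory Submission
  imports Defs
begin


lemma mat_facts:
  assumes "rat_orthogonal n Q" "transpose_mat Q * adj_mat n E * Q = adj_mat n F"
  shows "\<forall>j<n. \<forall>k<n. (\<Sum>a<n. Q$$(a,j)*Q$$(a,k)) = (if j=k then 1 else 0)"
    and "\<forall>i<n. \<forall>j<n. (\<Sum>b<n. Q$$(i,b)*Q$$(j,b)) = (if i=j then 1 else 0)"
    and "\<forall>j<n. \<forall>k<n. (\<Sum>a<n. \<Sum>b<n. Q$$(a,j) * (if {a,b}\<in>E then 1 else 0) * Q$$(b,k)) = (if {j,k}\<in>F then 1 else 0)"
proof -
  have Q: "Q \<in> carrier_mat n n" and O: "transpose_mat Q * Q = 1\<^sub>m n" using assms(1) unfolding rat_orthogonal_def by auto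
  have O2: "Q * transpose_mat Q = 1\<^sub>m n"
    by (rule mat_mult_left_right_inverse[OF _ Q O]) (use Q in auto)
  show "\<forall>j<n. \<forall>k<n. (\<Sum>a<n. Q$$(a,j)*Q$$(a,k)) = (if j=k then 1 else 0)"
  proof (intro allI impI)
    fix j k assume "j<n" "k<n"
    have "(transpose_mat Q * Q) $$ (j,k) = (if j=k then 1 else 0)" using O \<open>j<n\<close> \<open>k<n\<close> by simp
    moreover have "(transpose_mat Q * Q) $$ (j,k) = (\<Sum>a<n. Q$$(a,j)*Q$$(a,k))"
      using Q \<open>j<n\<close> \<open>k<n\<close> by (simp add: scalar_prod_def lessThan_atLeast0)
    ultimately show "(\<Sum>a<n. Q$$(a,j)*Q$$(a,k)) = (if j=k then 1 else 0)" by simp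
  qed
  show "\<forall>i<n. \<forall>j<n. (\<Sum>b<n. Q$$(i,b)*Q$$(j,b)) = (if i=j then 1 else 0)"
  proof (intro allI impI)
    fix j k assume "j<n" "k<n"
    have "(Q * transpose_mat Q) $$ (j,k) = (if j=k then 1 else 0)" using O2 \<open>j<n\<close> \<open>k<n\<close> by simp
    moreover have "(Q * transpose_mat Q) $$ (j,k) = (\<Sum>a<n. Q$$(j,a)*Q$$(k,a))"
      using Q \<open>j<n\<close> \<open>k<n\<close> by (simp add: scalar_prod_def lessThan_atLeast0)
    ultimately show "(\<Sum>b<n. Q$$(j,b)*Q$$(k,b)) = (if j=k then 1 else 0)" by simp
  qed
  show "\<forall>j<n. \<forall>k<n. (\<Sum>a<n. \<Sum>b<n. Q$$(a,j) * (if {a,b}\<in>E then 1 else 0) * Q$$(b,k)) = (if {j,k}\<in>F then 1 else 0)"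
  proof (intro allI impI)
    fix j k assume j: "j<n" and k: "k<n"
    have "(transpose_mat Q * adj_mat n E * Q) $$ (j,k) = (if {j,k}\<in>F then 1 else 0)"
      using assms(2) j k by (simp add: adj_mat_def)
    moreover have "(transpose_mat Q * adj_mat n E * Q) $$ (j,k) =
       (\<Sum>b<n. (\<Sum>a<n. Q$$(a,j) * (if {a,b}\<in>E then 1 else 0)) * Q$$(b,k))"
      using Q j k by (simp add: scalar_prod_def lessThan_atLeast0 adj_mat_def)
    moreover have "(\<Sum>b<n. (\<Sum>a<n. Q$$(a,j) * (if {a,b}\<in>E then 1 else 0)) * Q$$(b,k)) =
       (\<Sum>a<n. \<Sum>b<n. Q$$(a,j) * (if {a,b}\<in>E then 1 else 0) * Q$$(b,k))"
      by (simp add: sum_distrib_right) (rule sum.swap)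
    ultimately show "(\<Sum>a<n. \<Sum>b<n. Q$$(a,j) * (if {a,b}\<in>E then 1 else (0::rat)) * Q$$(b,k)) = (if {j,k}\<in>F then 1 else 0)" by simp
  qed
qed


lemma greedy_disjoint:
  fixes V :: "'a set" and S :: "'a \<Rightarrow> 'b set" and L :: nat
  assumes "finite V" "\<forall>j\<in>V. S j \<noteq> {} \<and> finite (S j) \<and> card (S j) \<le> L"
    "\<forall>u. card {j\<in>V. u \<in> S j} \<le> L"
  shows "\<exists>J\<subseteq>V. (\<forall>i\<in>J. \<forall>j\<in>J. i \<noteq> j \<longrightarrow> S i \<inter> S j = {}) \<and> card V \<le> L*L*card J"
  using assms
proof (induction "card V" arbitrary: V rule: less_induct)
  case less
  show ?case
  proof (cases "V = {}")
    case True then show ?thesis by auto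
  next
    case False
    then obtain j where j: "j \<in> V" by auto
    define N where "N = (\<Union>u\<in>S j. {j'\<in>V. u \<in> S j'})"
    have NV: "N \<subseteq> V" unfolding N_def by auto
    have jN: "j \<in> N" using less.prems(2) j unfolding N_def by auto
    have finN: "finite N" using NV less.prems(1) finite_subset by blast
    have "card N \<le> (\<Sum>u\<in>S j. card {j'\<in>V. u \<in> S j'})"
      unfolding N_def by (rule card_UN_le) (use less.prems(2) j in auto)
    also have "\<dots> \<le> (\<Sum>u\<in>S j. L)" by (rule sum_mono) (use less.prems(3) in auto)
    also have "\<dots> = card (S j) * L" by simp
    also have "\<dots> \<le> L * L" using less.prems(2) j by simp
    finally have cN: "card N \<le> L*L" .
    define V' where "V' = V - N"
    have cV': "card V' < card V" unfolding V'_def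
      
    proof (rule psubset_card_mono)
      show "finite V" using less.prems(1) .
      show "V - N \<subset> V" using jN j by blast
    qed
    obtain J' where J': "J' \<subseteq> V'" "\<forall>i\<in>J'. \<forall>j\<in>J'. i \<noteq> j \<longrightarrow> S i \<inter> S j = {}" "card V' \<le> L*L*card J'"
    proof -
      have p1: "finite V'" using less.prems(1) unfolding V'_def by simp
      have p2: "\<forall>j\<in>V'. S j \<noteq> {} \<and> finite (S j) \<and> card (S j) \<le> L" using less.prems(2) unfolding V'_def by simp
      have p3: "\<forall>u. card {j\<in>V'. u \<in> S j} \<le> L"
      proof
        fix u
        have "card {j\<in>V'. u \<in> S j} \<le> card {j\<in>V. u \<in> S j}"
          by (rule card_mono) (use less.prems(1) in \<open>auto simp: V'_def\<close>)
        then show "card {j\<in>V'. u \<in> S j} \<le> L" using less.prems(3) le_trans by blast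
      qed
      show ?thesis using less.hyps[OF cV' p1 p2 p3] that by blast
    qed
    have jJ': "j \<notin> J'" using J'(1) jN unfolding V'_def by auto
    have disj: "\<forall>i\<in>J'. S i \<inter> S j = {}"
    proof
      fix i assume "i \<in> J'"
      then have "i \<in> V" "i \<notin> N" using J'(1) unfolding V'_def by auto
      then show "S i \<inter> S j = {}" unfolding N_def by auto
    qed
    have finJ': "finite J'" using J'(1) less.prems(1) unfolding V'_def by (meson finite_Diff finite_subset)
    have "card V = card N + card V'" unfolding V'_def
      using card_Diff_subset[OF finN NV] card_mono[OF less.prems(1) NV] by simp
    also have "\<dots> \<le> L*L + L*L*card J'" using cN J'(3) by simp
    also have "\<dots> = L*L*card (insert j J')" using jJ' finJ' by simp
    finally have "card V \<le> L*L*card (insert j J')" .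
    moreover have "insert j J' \<subseteq> V" using j J'(1) unfolding V'_def by auto
    moreover have "\<forall>i\<in>insert j J'. \<forall>k\<in>insert j J'. i \<noteq> k \<longrightarrow> S i \<inter> S k = {}"
      using J'(2) disj by blast
    ultimately show ?thesis by blast
  qed
qed


definition gp :: "real \<Rightarrow> 'a set \<Rightarrow> ('a set \<Rightarrow> bool) \<Rightarrow> real" where
  "gp p A P = (\<Sum>E\<in>Pow A. if P E then p ^ card E * (1-p)^(card A - card E) else 0)"

definition wt :: "real \<Rightarrow> 'a set \<Rightarrow> 'a set \<Rightarrow> real" where
  "wt p A E = p ^ card E * (1-p)^(card A - card E)"

lemma gp_split:
  assumes "finite A" "e \<notin> A"
  shows "gp p (insert e A) P = (\<Sum>E\<in>Pow A. wt p A E *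
            ((if P (insert e E) then p else 0) + (if P E then 1-p else 0)))"
proof -
  have disj: "Pow A \<inter> insert e ` Pow A = {}" using assms(2) by auto
  have inj: "inj_on (insert e) (Pow A)"
  proof (rule inj_onI)
    fix x y assume "x \<in> Pow A" "y \<in> Pow A" "insert e x = insert e y"
    then show "x = y" using assms(2) by (metis Pow_iff insert_ident subset_eq)
  qed
  have fin: "finite (Pow A)" using assms(1) by simp
  have cA: "card (insert e A) = Suc (card A)" using assms by simp
  have t1: "(if P E then p ^ card E * (1-p)^(card (insert e A) - card E) else 0)
      = wt p A E * (if P E then 1-p else 0)" if "E \<in> Pow A" for E
  proof -
    have "card E \<le> card A" using that assms(1) by (simp add: card_mono)
    then have "card (insert e A) - card E = Suc (card A - card E)" using cA by simp
    then show ?thesis unfolding wt_def by (simp add: algebra_simps)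
  qed
  have t2: "(if P (insert e E) then p ^ card (insert e E) * (1-p)^(card (insert e A) - card (insert e E)) else 0)
      = wt p A E * (if P (insert e E) then p else 0)" if "E \<in> Pow A" for E
  proof -
    have fE: "finite E" "e \<notin> E" using that assms finite_subset by auto
    then have "card (insert e E) = Suc (card E)" by simp
    then show ?thesis using cA unfolding wt_def by (simp add: algebra_simps)
  qed
  have "gp p (insert e A) P = (\<Sum>E\<in>Pow A. if P E then p ^ card E * (1-p)^(card (insert e A) - card E) else 0)
     + (\<Sum>E\<in>insert e ` Pow A. if P E then p ^ card E * (1-p)^(card (insert e A) - card E) else 0)"
    unfolding gp_def Pow_insert by (rule sum.union_disjoint) (use fin disj in auto)
  also have "(\<Sum>E\<in>insert e ` Pow A. if P E then p ^ card E * (1-p)^(card (insert e A) - card E) else 0)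
     = (\<Sum>E\<in>Pow A. if P (insert e E) then p ^ card (insert e E) * (1-p)^(card (insert e A) - card (insert e E)) else 0)"
    by (rule sum.reindex[OF inj, unfolded comp_def])
  also have "\<dots> = (\<Sum>E\<in>Pow A. wt p A E * (if P (insert e E) then p else 0))"
    by (rule sum.cong) (use t2 in auto)
  also have "(\<Sum>E\<in>Pow A. if P E then p ^ card E * (1-p)^(card (insert e A) - card E) else 0)
     = (\<Sum>E\<in>Pow A. wt p A E * (if P E then 1-p else 0))"
    by (rule sum.cong) (use t1 in auto)
  finally show ?thesis by (simp add: sum.distrib algebra_simps)
qed

lemma wt_nonneg: "0 \<le> p \<Longrightarrow> p \<le> 1 \<Longrightarrow> 0 \<le> wt p A E"
  unfolding wt_def by simp

lemma gp_nonneg: "0 \<le> p \<Longrightarrow> p \<le> 1 \<Longrightarrow> 0 \<le> gp p A P"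
  unfolding gp_def by (rule sum_nonneg) auto

lemma gp_mono:
  assumes "0 \<le> p" "p \<le> 1" "\<And>E. E \<subseteq> A \<Longrightarrow> P E \<Longrightarrow> R E"
  shows "gp p A P \<le> gp p A R"
  unfolding gp_def by (rule sum_mono) (use assms in auto)

lemma gp_true: "finite A \<Longrightarrow> gp p A (\<lambda>_. True) = 1"
proof (induction A rule: finite_induct)
  case empty then show ?case by (simp add: gp_def)
next
  case (insert e A)
  have "gp p (insert e A) (\<lambda>_. True) = (\<Sum>E\<in>Pow A. wt p A E)"
    using gp_split[OF insert(1,2)] by simp
  also have "\<dots> = gp p A (\<lambda>_. True)" unfolding gp_def wt_def by simp
  finally show ?case using insert(3) by simp
qed

lemma gp_le1: "finite A \<Longrightarrow> 0 \<le> p \<Longrightarrow> p \<le> 1 \<Longrightarrow> gp p A P \<le> 1"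
  using gp_mono[of p A P "\<lambda>_. True"] gp_true[of A p] by simp

lemma gp_union:
  assumes "finite C" "0 \<le> p" "p \<le> 1"
  shows "gp p A (\<lambda>E. \<exists>c\<in>C. P c E) \<le> (\<Sum>c\<in>C. gp p A (P c))"
proof -
  have "gp p A (\<lambda>E. \<exists>c\<in>C. P c E) \<le> (\<Sum>E\<in>Pow A. \<Sum>c\<in>C. if P c E then wt p A E else 0)"
    unfolding gp_def
  proof (rule sum_mono)
    fix E assume "E \<in> Pow A"
    show "(if \<exists>c\<in>C. P c E then p ^ card E * (1 - p) ^ (card A - card E) else 0)
         \<le> (\<Sum>c\<in>C. if P c E then wt p A E else 0)"
    proof (cases "\<exists>c\<in>C. P c E")
      case True
      then obtain c where c: "c \<in> C" "P c E" by auto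
      have "(\<Sum>c\<in>C. if P c E then wt p A E else 0) \<ge> (if P c E then wt p A E else 0)"
        by (rule member_le_sum) (use c assms wt_nonneg in auto)
      then show ?thesis using True c unfolding wt_def by simp
    next
      case False
      then show ?thesis using assms wt_nonneg by (auto intro: sum_nonneg)
    qed
  qed
  also have "\<dots> = (\<Sum>c\<in>C. gp p A (P c))" unfolding gp_def wt_def by (rule sum.swap)
  finally show ?thesis .
qed

definition insens :: "'a set \<Rightarrow> ('a set \<Rightarrow> bool) \<Rightarrow> 'a \<Rightarrow> bool" where
  "insens A R e \<longleftrightarrow> (\<forall>E\<subseteq>A. R (insert e E) = R (E - {e}))"

definition excl :: "'a set \<Rightarrow> ('a set \<Rightarrow> bool) \<Rightarrow> 'a \<Rightarrow> bool" where
  "excl A P e \<longleftrightarrow> (\<forall>E\<subseteq>A. \<not> (P (insert e E) \<and> P (E - {e})))"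

lemma gp_flip:
  assumes "finite A" "e \<in> A" "insens A R e" "excl A P e" "0 \<le> p" "p \<le> 1"
  shows "gp p A (\<lambda>E. P E \<and> R E) \<le> max p (1-p) * gp p A R"
proof -
  define A' where "A' = A - {e}"
  have AA: "A = insert e A'" "e \<notin> A'" "finite A'" using assms(1,2) unfolding A'_def by auto
  have "gp p A (\<lambda>E. P E \<and> R E) = (\<Sum>E\<in>Pow A'. wt p A' E *
            ((if P (insert e E) \<and> R (insert e E) then p else 0) + (if P E \<and> R E then 1-p else 0)))"
    using gp_split[OF AA(3,2)] AA(1) by simp
  also have "\<dots> \<le> (\<Sum>E\<in>Pow A'. wt p A' E * (max p (1-p) * (if R E then 1 else 0)))"
  proof (rule sum_mono)
    fix E assume E: "E \<in> Pow A'"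
    then have EA: "E \<subseteq> A" "E - {e} = E" using AA by auto
    have RR: "R (insert e E) = R E" using assms(3) EA unfolding insens_def by metis
    have PP: "\<not> (P (insert e E) \<and> P E)" using assms(4) EA unfolding excl_def by metis
    have "((if P (insert e E) \<and> R (insert e E) then p else 0) + (if P E \<and> R E then 1-p else 0))
          \<le> max p (1-p) * (if R E then 1 else 0)"
      using RR PP assms(5,6) by auto
    then show "wt p A' E * ((if P (insert e E) \<and> R (insert e E) then p else 0) + (if P E \<and> R E then 1-p else 0))
          \<le> wt p A' E * (max p (1-p) * (if R E then 1 else 0))"
      by (rule mult_left_mono) (use wt_nonneg assms in auto)
  qed
  also have "\<dots> = max p (1-p) * (\<Sum>E\<in>Pow A'. wt p A' E * ((if R (insert e E) then p else 0) + (if R E then 1-p else 0)))"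
  proof -
    have "\<And>E. E \<in> Pow A' \<Longrightarrow> R (insert e E) = R E"
    proof -
      fix E assume E: "E \<in> Pow A'"
      then have EA: "E \<subseteq> A" "E - {e} = E" using AA by auto
      show "R (insert e E) = R E" using assms(3) EA unfolding insens_def by metis
    qed
    then show ?thesis
      by (auto simp: sum_distrib_left algebra_simps intro!: sum.cong)
  qed
  also have "\<dots> = max p (1-p) * gp p A R"
    using gp_split[OF AA(3,2)] AA(1) by simp
  finally show ?thesis .
qed

lemma gp_iter:
  assumes "finite A" "finite I" "0 \<le> p" "p \<le> 1"
    "\<forall>i\<in>I. piv i \<in> A" "\<forall>i\<in>I. excl A (P i) (piv i)"
    "\<forall>i\<in>I. \<forall>j\<in>I. i \<noteq> j \<longrightarrow> insens A (P i) (piv j)"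
  shows "gp p A (\<lambda>E. \<forall>i\<in>I. P i E) \<le> max p (1-p) ^ card I"
  using assms(2,5,6,7)
proof (induction I rule: finite_induct)
  case empty then show ?case using gp_le1[OF assms(1,3,4)] by simp
next
  case (insert a I)
  have ins: "insens A (\<lambda>E. \<forall>i\<in>I. P i E) (piv a)"
    using insert.prems(3) insert.hyps(2) unfolding insens_def by (metis insert_iff)
  have "gp p A (\<lambda>E. \<forall>i\<in>insert a I. P i E) = gp p A (\<lambda>E. P a E \<and> (\<forall>i\<in>I. P i E))" by simp
  also have "\<dots> \<le> max p (1-p) * gp p A (\<lambda>E. \<forall>i\<in>I. P i E)"
    by (rule gp_flip[OF assms(1) _ ins]) (use insert.prems assms in auto)
  also have "\<dots> \<le> max p (1-p) * max p (1-p) ^ card I"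
    by (rule mult_left_mono) (use insert assms in auto)
  finally show ?case using insert.hyps by simp
qed


locale orth =
  fixes n :: nat and l :: nat and q :: "nat \<Rightarrow> nat \<Rightarrow> rat"
  assumes col: "\<And>j k. j<n \<Longrightarrow> k<n \<Longrightarrow> (\<Sum>a<n. q a j * q a k) = (if j=k then 1 else 0)"
    and row: "\<And>i j. i<n \<Longrightarrow> j<n \<Longrightarrow> (\<Sum>b<n. q i b * q j b) = (if i=j then 1 else 0)"
    and integ: "\<And>i j. i<n \<Longrightarrow> j<n \<Longrightarrow> of_nat l * q i j \<in> \<int>"
    and lpos: "l > 0"
begin

lemma col_sq: "j<n \<Longrightarrow> (\<Sum>a<n. (q a j)^2) = 1"
  using col[of j j] by (simp add: power2_eq_square)

lemma row_sq: "i<n \<Longrightarrow> (\<Sum>b<n. (q i b)^2) = 1"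
  using row[of i i] by (simp add: power2_eq_square)

lemma sq_le1: "i<n \<Longrightarrow> j<n \<Longrightarrow> (q i j)^2 \<le> 1"
proof -
  assume "i<n" "j<n"
  have "(q i j)^2 \<le> (\<Sum>a<n. (q a j)^2)" by (rule member_le_sum) (use \<open>i<n\<close> in auto)
  then show ?thesis using col_sq[OF \<open>j<n\<close>] by simp
qed

lemma abs_le1: "i<n \<Longrightarrow> j<n \<Longrightarrow> \<bar>q i j\<bar> \<le> 1"
  using sq_le1 by (metis abs_le_square_iff abs_one power_one)

lemma nz_ge1: "i<n \<Longrightarrow> j<n \<Longrightarrow> q i j \<noteq> 0 \<Longrightarrow> (of_nat l * q i j)^2 \<ge> 1"
proof -
  assume a: "i<n" "j<n" "q i j \<noteq> 0"
  obtain z where z: "of_nat l * q i j = of_int z" using integ[OF a(1,2)] by (auto elim: Ints_cases)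
  have "z \<noteq> 0" using z a(3) lpos by auto
  then have "1 \<le> z^2" by (metis dvd_imp_le_int int_one_le_iff_zero_less not_one_le_zero power2_eq_square zero_less_power2)
  then have "(1::rat) \<le> of_int (z^2)" by linarith
  then show ?thesis using z by simp
qed

lemma col_supp_card: "j<n \<Longrightarrow> card {a. a<n \<and> q a j \<noteq> 0} \<le> l^2"
proof -
  assume j: "j<n"
  let ?S = "{a. a<n \<and> q a j \<noteq> 0}"
  have "of_nat (card ?S) = (\<Sum>a\<in>?S. (1::rat))" by simp
  also have "\<dots> \<le> (\<Sum>a\<in>?S. (of_nat l * q a j)^2)" by (rule sum_mono) (use nz_ge1 j in auto)
  also have "\<dots> \<le> (\<Sum>a<n. (of_nat l * q a j)^2)" by (rule sum_mono2) auto
  also have "\<dots> = of_nat l^2 * (\<Sum>a<n. (q a j)^2)" by (simp add: power_mult_distrib sum_distrib_left)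
  also have "\<dots> = of_nat (l^2)" using col_sq[OF j] by simp
  finally show ?thesis by (simp only: of_nat_le_iff)
qed

lemma row_supp_card: "i<n \<Longrightarrow> card {b. b<n \<and> q i b \<noteq> 0} \<le> l^2"
proof -
  assume i: "i<n"
  let ?S = "{b. b<n \<and> q i b \<noteq> 0}"
  have "of_nat (card ?S) = (\<Sum>a\<in>?S. (1::rat))" by simp
  also have "\<dots> \<le> (\<Sum>b\<in>?S. (of_nat l * q i b)^2)" by (rule sum_mono) (use nz_ge1 i in auto)
  also have "\<dots> \<le> (\<Sum>b<n. (of_nat l * q i b)^2)" by (rule sum_mono2) auto
  also have "\<dots> = of_nat l^2 * (\<Sum>b<n. (q i b)^2)" by (simp add: power_mult_distrib sum_distrib_left)
  also have "\<dots> = of_nat (l^2)" using row_sq[OF i] by simp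
  finally show ?thesis by (simp only: of_nat_le_iff)
qed

lemma triv_row: "i<n \<Longrightarrow> j<n \<Longrightarrow> \<bar>q i j\<bar> = 1 \<Longrightarrow> k<n \<Longrightarrow> k \<noteq> j \<Longrightarrow> q i k = 0"
proof -
  assume a: "i<n" "j<n" "\<bar>q i j\<bar> = 1" "k<n" "k \<noteq> j"
  have sq: "(q i j)^2 = 1" using a(3) power2_abs[of "q i j"] by simp
  have "(\<Sum>b<n. (q i b)^2) = (q i j)^2 + (\<Sum>b\<in>{..<n}-{j}. (q i b)^2)"
    by (rule sum.remove) (use a in auto)
  then have "(\<Sum>b\<in>{..<n}-{j}. (q i b)^2) = 0" using row_sq[OF a(1)] sq by simp
  then have "\<forall>b\<in>{..<n}-{j}. (q i b)^2 = 0" by (subst (asm) sum_nonneg_eq_0_iff) auto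
  then show ?thesis using a by auto
qed

lemma triv_col: "i<n \<Longrightarrow> j<n \<Longrightarrow> \<bar>q i j\<bar> = 1 \<Longrightarrow> a<n \<Longrightarrow> a \<noteq> i \<Longrightarrow> q a j = 0"
proof -
  assume a: "i<n" "j<n" "\<bar>q i j\<bar> = 1" "a<n" "a \<noteq> i"
  have sq: "(q i j)^2 = 1" using a(3) power2_abs[of "q i j"] by simp
  have "(\<Sum>b<n. (q b j)^2) = (q i j)^2 + (\<Sum>b\<in>{..<n}-{i}. (q b j)^2)"
    by (rule sum.remove) (use a in auto)
  then have "(\<Sum>b\<in>{..<n}-{i}. (q b j)^2) = 0" using col_sq[OF a(2)] sq by simp
  then have "\<forall>b\<in>{..<n}-{i}. (q b j)^2 = 0" by (subst (asm) sum_nonneg_eq_0_iff) auto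
  then show ?thesis using a by auto
qed

definition TR where "TR = {i. i<n \<and> (\<exists>j<n. \<bar>q i j\<bar> = 1)}"
definition TC where "TC = {j. j<n \<and> (\<exists>i<n. \<bar>q i j\<bar> = 1)}"
definition NC where "NC = {j. j<n \<and> j \<notin> TC}"
definition supp where "supp j = {a. a<n \<and> q a j \<noteq> 0}"

lemma card_TC_le: "card TC \<le> card TR"
proof -
  define f where "f j = (SOME i. i<n \<and> \<bar>q i j\<bar> = 1)" for j
  have f: "f j < n \<and> \<bar>q (f j) j\<bar> = 1" if "j \<in> TC" for j
    using that unfolding TC_def f_def by (metis (mono_tags, lifting) mem_Collect_eq someI_ex)
  have "inj_on f TC"
  proof (rule inj_onI)
    fix x y assume xy: "x \<in> TC" "y \<in> TC" "f x = f y"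
    show "x = y"
    proof (rule ccontr)
      assume "x \<noteq> y"
      then have "q (f x) y = 0" using triv_row[of "f x" x y] f[OF xy(1)] xy(1) xy(2) \<open>x \<noteq> y\<close> unfolding TC_def by auto
      then show False using f[OF xy(2)] xy(3) by simp
    qed
  qed
  moreover have "f ` TC \<subseteq> TR" using f unfolding TR_def TC_def by auto
  moreover have "finite TR" unfolding TR_def by auto
  ultimately show ?thesis by (rule card_inj_on_le)
qed

lemma NC_card: "n - card TR \<le> card NC"
proof -
  have "NC = {..<n} - TC" unfolding NC_def TC_def by auto
  moreover have "TC \<subseteq> {..<n}" unfolding TC_def by auto
  ultimately have "card NC = n - card TC" by (simp add: card_Diff_subset finite_subset)
  then show ?thesis using card_TC_le by simp
qed

lemma NC_supp_TR: "j \<in> NC \<Longrightarrow> supp j \<inter> TR = {}"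
proof (rule ccontr)
  assume j: "j \<in> NC" and "supp j \<inter> TR \<noteq> {}"
  then obtain a where a: "a<n" "q a j \<noteq> 0" "a \<in> TR" unfolding supp_def by auto
  then obtain c where c: "c<n" "\<bar>q a c\<bar> = 1" unfolding TR_def by auto
  have "c = j" using triv_row[OF a(1) c(1) c(2)] a j unfolding NC_def by auto
  then show False using j c a unfolding NC_def TC_def by auto
qed

lemma NC_lt1: "j \<in> NC \<Longrightarrow> a<n \<Longrightarrow> \<bar>q a j\<bar> < 1"
  using abs_le1[of a j] unfolding NC_def TC_def by force

lemma supp_ne: "j<n \<Longrightarrow> supp j \<noteq> {}"
proof
  assume "j<n" "supp j = {}"
  then have "\<forall>a<n. q a j = 0" unfolding supp_def by auto
  then show False using col_sq[OF \<open>j<n\<close>] by simp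
qed

lemma greedy_cols:
  assumes greedy: "\<And>(V::nat set) (S :: nat \<Rightarrow> nat set) L. finite V \<Longrightarrow> \<forall>j\<in>V. S j \<noteq> {} \<and> finite (S j) \<and> card (S j) \<le> L \<Longrightarrow>
    \<forall>u. card {j\<in>V. u \<in> S j} \<le> L \<Longrightarrow>
    \<exists>J\<subseteq>V. (\<forall>i\<in>J. \<forall>j\<in>J. i \<noteq> j \<longrightarrow> S i \<inter> S j = {}) \<and> card V \<le> L*L*card J"
  shows "\<exists>J\<subseteq>NC. (\<forall>i\<in>J. \<forall>j\<in>J. i \<noteq> j \<longrightarrow> supp i \<inter> supp j = {}) \<and> n - card TR \<le> l^2*l^2*card J"
proof -
  have fin: "finite NC" unfolding NC_def by auto
  have h2: "\<forall>j\<in>NC. supp j \<noteq> {} \<and> finite (supp j) \<and> card (supp j) \<le> l^2"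
    using supp_ne col_supp_card unfolding NC_def supp_def by auto
  have h3: "\<forall>u. card {j\<in>NC. u \<in> supp j} \<le> l^2"
  proof
    fix u
    show "card {j\<in>NC. u \<in> supp j} \<le> l^2"
    proof (cases "u < n")
      case True
      have "card {j\<in>NC. u \<in> supp j} \<le> card {b. b<n \<and> q u b \<noteq> 0}"
        by (rule card_mono) (auto simp: NC_def supp_def)
      then show ?thesis using row_supp_card[OF True] by simp
    next
      case False
      then have "{j\<in>NC. u \<in> supp j} = {}" unfolding supp_def by auto
      then have "card {j\<in>NC. u \<in> supp j} = 0" by (simp only: card.empty)
      then show ?thesis by linarith
    qed
  qed
  obtain J where J: "J \<subseteq> NC" "\<forall>i\<in>J. \<forall>j\<in>J. i \<noteq> j \<longrightarrow> supp i \<inter> supp j = {}" "card NC \<le> l^2*l^2*card J"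
    using greedy[OF fin h2 h3] by blast
  have "n - card TR \<le> l^2*l^2*card J" using NC_card J(3) by linarith
  then show ?thesis using J(1,2) by blast
qed

end


lemma sum_one:
  fixes f :: "nat \<Rightarrow> 'a::comm_monoid_add"
  assumes "a0 < n" "\<And>a. a < n \<Longrightarrow> a \<noteq> a0 \<Longrightarrow> f a = 0"
  shows "(\<Sum>a<n. f a) = f a0"
proof -
  have "(\<Sum>a<n. f a) = f a0 + (\<Sum>a\<in>{..<n}-{a0}. f a)" by (rule sum.remove) (use assms in auto)
  also have "(\<Sum>a\<in>{..<n}-{a0}. f a) = 0" by (rule sum.neutral) (use assms in auto)
  finally show ?thesis by simp
qed

context orth begin

lemma all_triv_iso:
  assumes adj: "\<And>j k. j<n \<Longrightarrow> k<n \<Longrightarrow> (\<Sum>a<n. \<Sum>b<n. q a j * (if {a,b}\<in>E then 1 else 0) * q b k) = (if {j,k}\<in>F then 1 else 0)"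
    and EG: "E \<in> graphs n" and FG: "F \<in> graphs n"
    and allT: "TR = {..<n}"
  shows "graph_iso n E F"
proof -
  define \<pi> where "\<pi> i = (SOME j. j<n \<and> \<bar>q i j\<bar> = 1)" for i
  have \<pi>: "\<pi> i < n \<and> \<bar>q i (\<pi> i)\<bar> = 1" if "i<n" for i
  proof -
    have "i \<in> TR" using allT that by auto
    then have "\<exists>j. j<n \<and> \<bar>q i j\<bar> = 1" unfolding TR_def by auto
    then show ?thesis unfolding \<pi>_def by (rule someI_ex)
  qed
  have inj: "inj_on \<pi> {..<n}"
  proof (rule inj_onI)
    fix x y assume xy: "x \<in> {..<n}" "y \<in> {..<n}" "\<pi> x = \<pi> y"
    show "x = y"
    proof (rule ccontr)
      assume "x \<noteq> y"
      have "\<bar>q x (\<pi> x)\<bar> = 1" "\<pi> x < n" using \<pi>[of x] xy(1) by auto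
      then have "q y (\<pi> x) = 0" using triv_col[of x "\<pi> x" y] xy \<open>x \<noteq> y\<close> by auto
      then show False using \<pi>[of y] xy by auto
    qed
  qed
  have img: "\<pi> ` {..<n} = {..<n}"
    by (rule endo_inj_surj) (use inj \<pi> in auto)
  define \<rho> where "\<rho> j = (SOME i. i<n \<and> \<pi> i = j)" for j
  have \<rho>: "\<rho> j < n \<and> \<pi> (\<rho> j) = j" if "j<n" for j
  proof -
    have "\<exists>i. i<n \<and> \<pi> i = j" using img that by (metis imageE lessThan_iff)
    then show ?thesis unfolding \<rho>_def by (rule someI_ex)
  qed
  have \<rho>\<pi>: "\<rho> (\<pi> i) = i" if "i<n" for i
    using inj \<rho>[of "\<pi> i"] \<pi>[OF that] that unfolding inj_on_def by auto
  have colz: "q a j = 0" if "j<n" "a<n" "a \<noteq> \<rho> j" for a j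
    using triv_col[of "\<rho> j" j a] \<rho>[OF that(1)] \<pi>[of "\<rho> j"] that by auto
  have key: "({j,k}\<in>F) = ({\<rho> j, \<rho> k}\<in>E)" if jk: "j<n" "k<n" for j k
  proof -
    let ?A = "\<lambda>a b. (if {a,b}\<in>E then 1 else (0::rat))"
    have "(\<Sum>a<n. \<Sum>b<n. q a j * ?A a b * q b k) = (\<Sum>b<n. q (\<rho> j) j * ?A (\<rho> j) b * q b k)"
      by (rule sum_one) (use \<rho> jk colz in auto)
    also have "\<dots> = q (\<rho> j) j * ?A (\<rho> j) (\<rho> k) * q (\<rho> k) k"
      by (rule sum_one) (use \<rho> jk colz in auto)
    finally have eq: "q (\<rho> j) j * ?A (\<rho> j) (\<rho> k) * q (\<rho> k) k = (if {j,k}\<in>F then 1 else 0)"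
      using adj[OF jk] by simp
    have s1: "\<bar>q (\<rho> j) j\<bar> = 1" "\<bar>q (\<rho> k) k\<bar> = 1" using \<rho> \<pi> jk by metis+
    show ?thesis
    proof (cases "{\<rho> j, \<rho> k}\<in>E")
      case True
      then have e2: "q (\<rho> j) j * q (\<rho> k) k = (if {j,k}\<in>F then 1 else 0)" using eq by simp
      have "\<bar>q (\<rho> j) j * q (\<rho> k) k\<bar> = 1" using s1 by (simp add: abs_mult)
      then have "{j,k}\<in>F" using e2 by (cases "{j,k}\<in>F") auto
      then show ?thesis using True by simp
    next
      case False
      then show ?thesis using eq by (auto split: if_splits)
    qed
  qed
  have Eall: "E \<subseteq> all_edges n" "F \<subseteq> all_edges n" using EG FG unfolding graphs_def by auto
  have "F = (\<lambda>e. \<pi> ` e) ` E"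
  proof
    show "(\<lambda>e. \<pi> ` e) ` E \<subseteq> F"
    proof
      fix f assume "f \<in> (\<lambda>e. \<pi> ` e) ` E"
      then obtain e where e: "e \<in> E" "f = \<pi> ` e" by auto
      then obtain a b where ab: "e = {a,b}" "a<n" "b<n" using Eall unfolding all_edges_def by auto
      have "{\<rho> (\<pi> a), \<rho> (\<pi> b)} \<in> E" using \<rho>\<pi> ab e by simp
      then have "{\<pi> a, \<pi> b} \<in> F" using key[of "\<pi> a" "\<pi> b"] \<pi> ab by auto
      then show "f \<in> F" using e ab by simp
    qed
  next
    show "F \<subseteq> (\<lambda>e. \<pi> ` e) ` E"
    proof
      fix f assume f: "f \<in> F"
      then obtain j k where jk: "f = {j,k}" "j<n" "k<n" using Eall unfolding all_edges_def by auto
      have "{\<rho> j, \<rho> k} \<in> E" using key[OF jk(2,3)] f jk by simp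
      moreover have "f = \<pi> ` {\<rho> j, \<rho> k}" using \<rho> jk by simp
      ultimately show "f \<in> (\<lambda>e. \<pi> ` e) ` E" by (rule rev_image_eqI)
    qed
  qed
  moreover have "bij_betw \<pi> {0..<n} {0..<n}"
    unfolding bij_betw_def using inj img by (simp add: lessThan_atLeast0)
  ultimately show ?thesis unfolding graph_iso_def by blast
qed

end


lemma not_int_small: "(r::rat) \<noteq> 0 \<Longrightarrow> \<bar>r\<bar> < 1 \<Longrightarrow> r \<notin> \<int>"
proof
  assume "r \<noteq> 0" "\<bar>r\<bar> < 1" "r \<in> \<int>"
  then obtain z where z: "r = of_int z" by (auto elim: Ints_cases)
  then have "\<bar>z\<bar> < 1" "z \<noteq> 0" using \<open>\<bar>r\<bar> < 1\<close> \<open>r \<noteq> 0\<close> by linarith+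
  then show False by linarith
qed

definition wcond :: "nat \<Rightarrow> (nat \<Rightarrow> rat) \<Rightarrow> nat \<Rightarrow> nat set set \<Rightarrow> bool" where
  "wcond n x w E \<longleftrightarrow> (\<Sum>u<n. if {w,u}\<in>E then x u else 0) \<in> \<int>"

definition pcond :: "nat \<Rightarrow> (nat \<Rightarrow> rat) \<Rightarrow> (nat \<Rightarrow> rat) \<Rightarrow> nat set set \<Rightarrow> bool" where
  "pcond n x y E \<longleftrightarrow> (\<Sum>a<n. \<Sum>b<n. x a * (if {a,b}\<in>E then 1 else 0) * y b) \<in> \<int>"

lemma wcond_insens:
  assumes "\<And>u. u<n \<Longrightarrow> x u \<noteq> 0 \<Longrightarrow> {w,u} \<noteq> e"
  shows "wcond n x w (insert e E) = wcond n x w (E - {e})"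
proof -
  have "(\<Sum>u<n. if {w,u}\<in>insert e E then x u else 0) = (\<Sum>u<n. if {w,u}\<in>E - {e} then x u else 0)"
    by (rule sum.cong) (use assms in auto)
  then show ?thesis unfolding wcond_def by simp
qed

lemma wcond_excl:
  assumes "w \<noteq> u0" "u0 < n" "x u0 \<notin> \<int>"
  shows "\<not> (wcond n x w (insert {w,u0} E) \<and> wcond n x w (E - {{w,u0}}))"
proof
  let ?e = "{w,u0}"
  assume a: "wcond n x w (insert ?e E) \<and> wcond n x w (E - {?e})"
  have "(\<Sum>u<n. if {w,u}\<in>insert ?e E then x u else 0) =
        (\<Sum>u<n. (if {w,u}\<in>E - {?e} then x u else 0) + (if u = u0 then x u0 else 0))"
  proof (rule sum.cong)
    fix u assume "u \<in> {..<n}"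
    show "(if {w,u}\<in>insert ?e E then x u else 0) = (if {w,u}\<in>E - {?e} then x u else 0) + (if u = u0 then x u0 else 0)"
    proof (cases "u = u0")
      case True then show ?thesis by simp
    next
      case False
      then have "{w,u} \<noteq> ?e" using assms(1) by (auto simp: doubleton_eq_iff)
      then show ?thesis using False by simp
    qed
  qed simp
  also have "\<dots> = (\<Sum>u<n. if {w,u}\<in>E - {?e} then x u else 0) + x u0"
    using assms(2) by (simp add: sum.distrib)
  finally have eq: "(\<Sum>u<n. if {w,u}\<in>insert ?e E then x u else 0) = (\<Sum>u<n. if {w,u}\<in>E - {?e} then x u else 0) + x u0" .
  have "x u0 = (\<Sum>u<n. if {w,u}\<in>insert ?e E then x u else 0) - (\<Sum>u<n. if {w,u}\<in>E - {?e} then x u else 0)"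
    using eq by simp
  also have "\<dots> \<in> \<int>" using a unfolding wcond_def by (intro Ints_diff) auto
  finally show False using assms(3) by simp
qed

lemma pcond_insens:
  assumes "\<And>a b. a<n \<Longrightarrow> b<n \<Longrightarrow> x a \<noteq> 0 \<Longrightarrow> y b \<noteq> 0 \<Longrightarrow> {a,b} \<noteq> e"
  shows "pcond n x y (insert e E) = pcond n x y (E - {e})"
proof -
  have "(\<Sum>a<n. \<Sum>b<n. x a * (if {a,b}\<in>insert e E then 1 else 0) * y b)
      = (\<Sum>a<n. \<Sum>b<n. x a * (if {a,b}\<in>E - {e} then 1 else 0) * y b)"
    by (intro sum.cong refl) (use assms in fastforce)
  then show ?thesis unfolding pcond_def by simp
qed

lemma pcond_excl:
  assumes "u0 \<noteq> v0" "u0 < n" "v0 < n" "y u0 = 0" "x u0 * y v0 \<notin> \<int>"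
  shows "\<not> (pcond n x y (insert {u0,v0} E) \<and> pcond n x y (E - {{u0,v0}}))"
proof
  let ?e = "{u0,v0}"
  assume a: "pcond n x y (insert ?e E) \<and> pcond n x y (E - {?e})"
  have inner: "(\<Sum>b<n. x a * (if {a,b}\<in>insert ?e E then 1 else 0) * y b) =
        (\<Sum>b<n. x a * (if {a,b}\<in>E - {?e} then 1 else 0) * y b) + (if a = u0 then x u0 * y v0 else 0)"
    if "a < n" for a
  proof -
    have "(\<Sum>b<n. x a * (if {a,b}\<in>insert ?e E then 1 else 0) * y b) =
        (\<Sum>b<n. x a * (if {a,b}\<in>E - {?e} then 1 else 0) * y b + (if a = u0 \<and> b = v0 then x u0 * y v0 else 0))"
    proof (rule sum.cong)
      fix b assume "b \<in> {..<n}"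
      show "x a * (if {a,b}\<in>insert ?e E then 1 else 0) * y b =
         x a * (if {a,b}\<in>E - {?e} then 1 else 0) * y b + (if a = u0 \<and> b = v0 then x u0 * y v0 else 0)"
      proof (cases "{a,b} = ?e")
        case True
        then have "(a = u0 \<and> b = v0) \<or> (a = v0 \<and> b = u0)" by (auto simp: doubleton_eq_iff)
        then show ?thesis using True assms(1,4) by auto
      next
        case False
        have z: "\<not> (a = u0 \<and> b = v0)" using False by auto
        have m: "({a,b}\<in>insert ?e E) = ({a,b}\<in>E - {?e})" using False by auto
        show ?thesis by (simp only: m z if_False add_0_right)
      qed
    qed simp
    also have "\<dots> = (\<Sum>b<n. x a * (if {a,b}\<in>E - {?e} then 1 else 0) * y b) + (if a = u0 then x u0 * y v0 else 0)"
      using assms(3) by (simp add: sum.distrib)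
    finally show ?thesis .
  qed
  have "(\<Sum>a<n. \<Sum>b<n. x a * (if {a,b}\<in>insert ?e E then 1 else 0) * y b) =
        (\<Sum>a<n. (\<Sum>b<n. x a * (if {a,b}\<in>E - {?e} then 1 else 0) * y b) + (if a = u0 then x u0 * y v0 else 0))"
    by (rule sum.cong) (use inner in auto)
  also have "\<dots> = (\<Sum>a<n. \<Sum>b<n. x a * (if {a,b}\<in>E - {?e} then 1 else 0) * y b) + x u0 * y v0"
    using assms(2) by (simp add: sum.distrib)
  finally have eq: "(\<Sum>a<n. \<Sum>b<n. x a * (if {a,b}\<in>insert ?e E then 1 else 0) * y b) =
        (\<Sum>a<n. \<Sum>b<n. x a * (if {a,b}\<in>E - {?e} then 1 else 0) * y b) + x u0 * y v0" .
  have "x u0 * y v0 = (\<Sum>a<n. \<Sum>b<n. x a * (if {a,b}\<in>insert ?e E then 1 else 0) * y b) -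
        (\<Sum>a<n. \<Sum>b<n. x a * (if {a,b}\<in>E - {?e} then 1 else 0) * y b)" using eq by simp
  also have "\<dots> \<in> \<int>" using a unfolding pcond_def by (intro Ints_diff) auto
  finally show False using assms(5) by simp
qed


definition supp_of :: "(nat \<Rightarrow> rat) \<Rightarrow> nat set" where "supp_of x = {u. x u \<noteq> 0}"

definition Iset :: "nat set \<Rightarrow> nat \<Rightarrow> (nat \<times> nat \<times> bool) set" where
  "Iset T k = {(i,w,True) | i w. i<k \<and> w\<in>T} \<union> {(i,j,False) | i j. i < k div 2 \<and> k div 2 \<le> j \<and> j < k}"

fun Pc :: "nat \<Rightarrow> (nat \<Rightarrow> rat) list \<Rightarrow> nat \<times> nat \<times> bool \<Rightarrow> nat set set \<Rightarrow> bool" where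
  "Pc n xs (i,w,b) E = (if b then wcond n (xs!i) w E else pcond n (xs!i) (xs!w) E)"

definition valid :: "nat \<Rightarrow> nat set \<Rightarrow> (nat \<Rightarrow> rat) list \<Rightarrow> bool" where
  "valid n T xs \<longleftrightarrow> T \<subseteq> {..<n} \<and>
     (\<forall>x\<in>set xs. supp_of x \<subseteq> {..<n} - T \<and> supp_of x \<noteq> {} \<and> (\<forall>u. \<bar>x u\<bar> < 1)) \<and>
     (\<forall>i<length xs. \<forall>j<length xs. i \<noteq> j \<longrightarrow> supp_of (xs!i) \<inter> supp_of (xs!j) = {})"

definition Ev :: "nat \<Rightarrow> nat set \<Rightarrow> (nat \<Rightarrow> rat) list \<Rightarrow> nat set set \<Rightarrow> bool" where
  "Ev n T xs E \<longleftrightarrow> valid n T xs \<and> (\<forall>d\<in>Iset T (length xs). Pc n xs d E)"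

lemma card_Iset: "finite T \<Longrightarrow> card (Iset T k) = k * card T + (k div 2) * (k - k div 2)"
proof -
  assume fT: "finite T"
  have A: "{(i,w,True) | i w. i<k \<and> w\<in>T} = (\<lambda>(i,w). (i,w,True)) ` ({..<k} \<times> T)" by auto
  have B: "{(i,j,False) | i j. i < k div 2 \<and> k div 2 \<le> j \<and> j < k} = (\<lambda>(i,j). (i,j,False)) ` ({..<k div 2} \<times> {k div 2..<k})" by auto
  have cA: "card {(i,w,True) | i w. i<k \<and> w\<in>T} = k * card T"
    unfolding A by (subst card_image) (auto simp: inj_on_def card_cartesian_product)
  have cB: "card {(i,j,False) | i j. i < k div 2 \<and> k div 2 \<le> j \<and> j < k} = (k div 2) * (k - k div 2)"
    unfolding B by (subst card_image) (auto simp: inj_on_def card_cartesian_product)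
  have fA: "finite {(i,w,True) | i w. i<k \<and> w\<in>T}" unfolding A using fT by simp
  have fB: "finite {(i,j,False) | i j. i < k div 2 \<and> k div 2 \<le> j \<and> j < k}" unfolding B by simp
  show ?thesis unfolding Iset_def
    by (subst card_Un_disjoint[OF fA fB]) (auto simp: cA cB)
qed

locale vcert =
  fixes n :: nat and T :: "nat set" and xs :: "(nat \<Rightarrow> rat) list"
  assumes V: "valid n T xs"
begin

abbreviation "k \<equiv> length xs"
definition "uu i = (SOME u. u \<in> supp_of (xs!i))"

lemma TS: "T \<subseteq> {..<n}" using V unfolding valid_def by auto

lemma xs_prop: "i < k \<Longrightarrow> supp_of (xs!i) \<subseteq> {..<n} - T \<and> supp_of (xs!i) \<noteq> {} \<and> (\<forall>u. \<bar>(xs!i) u\<bar> < 1)"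
  using V unfolding valid_def by auto

lemma disj: "i < k \<Longrightarrow> j < k \<Longrightarrow> u \<in> supp_of (xs!i) \<Longrightarrow> u \<in> supp_of (xs!j) \<Longrightarrow> i = j"
  using V unfolding valid_def by blast

lemma uu: "i < k \<Longrightarrow> uu i \<in> supp_of (xs!i)"
  using xs_prop[of i] unfolding uu_def by (metis ex_in_conv someI_ex)

lemma uu_n: "i < k \<Longrightarrow> uu i < n \<and> uu i \<notin> T" using uu xs_prop by blast

lemma supp_nT: "i < k \<Longrightarrow> (xs!i) u \<noteq> 0 \<Longrightarrow> u < n \<and> u \<notin> T"
  using xs_prop[of i] unfolding supp_of_def by blast

lemma uu_val: "i < k \<Longrightarrow> (xs!i) (uu i) \<noteq> 0 \<and> \<bar>(xs!i) (uu i)\<bar> < 1"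
  using uu xs_prop unfolding supp_of_def by blast

lemma uu_other: "i < k \<Longrightarrow> j < k \<Longrightarrow> i \<noteq> j \<Longrightarrow> (xs!j) (uu i) = 0"
  using uu disj unfolding supp_of_def by blast

fun piv :: "nat \<times> nat \<times> bool \<Rightarrow> nat set" where
  "piv (i,w,b) = (if b then {w, uu i} else {uu i, uu w})"

lemma Iset_cases: "d \<in> Iset T k \<Longrightarrow>
   (\<exists>i w. d = (i,w,True) \<and> i < k \<and> w \<in> T) \<or> (\<exists>i j. d = (i,j,False) \<and> i < k div 2 \<and> k div 2 \<le> j \<and> j < k)"
  unfolding Iset_def by auto

lemma piv_edge: "d \<in> Iset T k \<Longrightarrow> piv d \<in> all_edges n"
proof -
  assume "d \<in> Iset T k"
  then consider (W) i w where "d = (i,w,True)" "i < k" "w \<in> T"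
    | (P) i j where "d = (i,j,False)" "i < k div 2" "k div 2 \<le> j" "j < k"
    using Iset_cases by blast
  then show ?thesis
  proof cases
    case W
    then have "w < n" "uu i < n" "w \<noteq> uu i" using TS uu_n by auto
    then show ?thesis using W unfolding all_edges_def by auto
  next
    case P
    then have "i < k" "i \<noteq> j" by auto
    then have "uu i < n" "uu j < n" "uu i \<noteq> uu j" using uu_n uu_other uu_val P by (metis, metis, metis \<open>j<k\<close>)
    then show ?thesis using P unfolding all_edges_def by auto
  qed
qed

lemma uu_inj: "i < k \<Longrightarrow> a < k \<Longrightarrow> uu i = uu a \<Longrightarrow> i = a"
  using uu disj by metis

lemma supp_eq_uu: "i < k \<Longrightarrow> a < k \<Longrightarrow> (xs!i) u \<noteq> 0 \<Longrightarrow> u = uu a \<Longrightarrow> i = a"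
  using uu disj unfolding supp_of_def by blast

lemma piv_inj: "inj_on piv (Iset T k)"
proof (rule inj_onI)
  fix d d' assume d: "d \<in> Iset T k" and d': "d' \<in> Iset T k" and eq: "piv d = piv d'"
  from d consider (W) i w where "d = (i,w,True)" "i < k" "w \<in> T"
    | (P) i j where "d = (i,j,False)" "i < k div 2" "k div 2 \<le> j" "j < k"
    using Iset_cases by blast
  then show "d = d'"
  proof cases
    case W
    from d' consider (W') i' w' where "d' = (i',w',True)" "i' < k" "w' \<in> T"
      | (P') i' j' where "d' = (i',j',False)" "i' < k div 2" "k div 2 \<le> j'" "j' < k"
      using Iset_cases by blast
    then show ?thesis
    proof cases
      case W'
      have "(w = w' \<and> uu i = uu i') \<or> (w = uu i' \<and> uu i = w')" using eq W W' by (simp add: doubleton_eq_iff)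
      then show ?thesis using W W' uu_n uu_inj by metis
    next
      case P'
      have "w = uu i' \<or> w = uu j'" using eq W P' by (auto simp: doubleton_eq_iff)
      then show ?thesis using W P' uu_n by (metis less_le_trans div_le_dividend order_less_le_trans)
    qed
  next
    case P
    from d' consider (W') i' w' where "d' = (i',w',True)" "i' < k" "w' \<in> T"
      | (P') i' j' where "d' = (i',j',False)" "i' < k div 2" "k div 2 \<le> j'" "j' < k"
      using Iset_cases by blast
    then show ?thesis
    proof cases
      case W'
      have "w' = uu i \<or> w' = uu j" using eq P W' by (auto simp: doubleton_eq_iff)
      then show ?thesis using P W' uu_n by (metis less_le_trans div_le_dividend order_less_le_trans)
    next
      case P'
      have ik: "i < k" "i' < k" using P P' by auto
      have "(uu i = uu i' \<and> uu j = uu j') \<or> (uu i = uu j' \<and> uu j = uu i')" using eq P P' by (simp add: doubleton_eq_iff)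
      then show ?thesis
      proof
        assume "uu i = uu i' \<and> uu j = uu j'"
        then show ?thesis using uu_inj P P' ik by metis
      next
        assume "uu i = uu j' \<and> uu j = uu i'"
        then have "i = j'" using uu_inj P P' ik by metis
        then show ?thesis using P P' by simp
      qed
    qed
  qed
qed

lemma piv_excl: "d \<in> Iset T k \<Longrightarrow> excl A (Pc n xs d) (piv d)"
proof -
  assume d: "d \<in> Iset T k"
  then consider (W) i w where "d = (i,w,True)" "i < k" "w \<in> T"
    | (P) i j where "d = (i,j,False)" "i < k div 2" "k div 2 \<le> j" "j < k"
    using Iset_cases by blast
  then show ?thesis
  proof cases
    case W
    have h: "w \<noteq> uu i" "uu i < n" "(xs!i) (uu i) \<notin> \<int>"
      using W uu_n uu_val not_int_small by auto
    show ?thesis unfolding excl_def using wcond_excl[of w "uu i" n "xs!i", OF h] W by simp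
  next
    case P
    have ik: "i < k" "i \<noteq> j" using P by auto
    have h1: "uu i \<noteq> uu j" "uu i < n" "uu j < n" "(xs!j) (uu i) = 0"
      using uu_n uu_other P ik uu_val by (metis, auto)
    have "(xs!i) (uu i) * (xs!j) (uu j) \<noteq> 0" using uu_val ik P by auto
    moreover have "\<bar>(xs!i) (uu i) * (xs!j) (uu j)\<bar> < 1"
    proof -
      have "\<bar>(xs!i) (uu i)\<bar> < 1" "\<bar>(xs!j) (uu j)\<bar> < 1" using uu_val ik P by auto
      then have "\<bar>(xs!i) (uu i)\<bar> * \<bar>(xs!j) (uu j)\<bar> < 1 * 1" by (intro abs_mult_less) auto
      then show ?thesis by (simp add: abs_mult)
    qed
    ultimately have h2: "(xs!i) (uu i) * (xs!j) (uu j) \<notin> \<int>" by (rule not_int_small)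
    show ?thesis unfolding excl_def using pcond_excl[of "uu i" "uu j" n "xs!j" "xs!i", OF h1 h2] P by simp
  qed
qed


lemma piv_insens: "d \<in> Iset T k \<Longrightarrow> d' \<in> Iset T k \<Longrightarrow> d \<noteq> d' \<Longrightarrow> insens A (Pc n xs d) (piv d')"
proof -
  assume d: "d \<in> Iset T k" and d': "d' \<in> Iset T k" and ne: "d \<noteq> d'"
  from d consider (W) i w where "d = (i,w,True)" "i < k" "w \<in> T"
    | (P) i j where "d = (i,j,False)" "i < k div 2" "k div 2 \<le> j" "j < k"
    using Iset_cases by blast
  then show ?thesis
  proof cases
    case W
    have h: "{w,u} \<noteq> piv d'" if u: "u < n" "(xs!i) u \<noteq> 0" for u
    proof
      assume eq: "{w,u} = piv d'"
      have uT: "u \<notin> T" using supp_nT W u by auto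
      from d' consider (W') i' w' where "d' = (i',w',True)" "i' < k" "w' \<in> T"
        | (P') i' j' where "d' = (i',j',False)" "i' < k div 2" "k div 2 \<le> j'" "j' < k"
        using Iset_cases by blast
      then show False
      proof cases
        case W'
        have "(w = w' \<and> u = uu i') \<or> (w = uu i' \<and> u = w')" using eq W' by (simp add: doubleton_eq_iff)
        then show False
        proof
          assume "w = w' \<and> u = uu i'"
          then have "i = i'" using supp_eq_uu[of i i' u] W W' u by auto
          then show False using ne W W' \<open>w = w' \<and> u = uu i'\<close> by simp
        next
          assume "w = uu i' \<and> u = w'"
          then show False using uT W' by simp
        qed
      next
        case P'
        have "w = uu i' \<or> w = uu j'" using eq P' by (auto simp: doubleton_eq_iff)
        then show False using W P' uu_n by (metis less_le_trans div_le_dividend order_less_le_trans)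
      qed
    qed
    show ?thesis unfolding insens_def using wcond_insens[of n "xs!i" w "piv d'"] h W by auto
  next
    case P
    have ik: "i < k" "j < k" using P by auto
    have h: "{a,b} \<noteq> piv d'" if ab: "a < n" "b < n" "(xs!i) a \<noteq> 0" "(xs!j) b \<noteq> 0" for a b
    proof
      assume eq: "{a,b} = piv d'"
      have abT: "a \<notin> T" "b \<notin> T" using supp_nT ik ab by auto
      from d' consider (W') i' w' where "d' = (i',w',True)" "i' < k" "w' \<in> T"
        | (P') i' j' where "d' = (i',j',False)" "i' < k div 2" "k div 2 \<le> j'" "j' < k"
        using Iset_cases by blast
      then show False
      proof cases
        case W'
        have "w' = a \<or> w' = b" using eq W' by (auto simp: doubleton_eq_iff)
        then show False using abT W' by auto
      next
        case P'
        have ik': "i' < k" "j' < k" using P' by auto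
        have "(a = uu i' \<and> b = uu j') \<or> (a = uu j' \<and> b = uu i')" using eq P' by (simp add: doubleton_eq_iff)
        then show False
        proof
          assume "a = uu i' \<and> b = uu j'"
          then have "i = i'" "j = j'" using supp_eq_uu ik ik' ab by auto
          then show False using ne P P' by simp
        next
          assume "a = uu j' \<and> b = uu i'"
          then have "i = j'" using supp_eq_uu ik ik' ab by auto
          then show False using P P' by simp
        qed
      qed
    qed
    show ?thesis unfolding insens_def using pcond_insens[of n "xs!i" "xs!j" "piv d'"] h P by auto
  qed
qed

lemma finite_Iset: "finite (Iset T k)"
proof -
  have "Iset T k \<subseteq> {..<k} \<times> (T \<union> {..<k}) \<times> UNIV" unfolding Iset_def by auto
  moreover have "finite T" using TS finite_subset by blast
  moreover have "finite ({..<k} \<times> (T \<union> {..<k}) \<times> (UNIV :: bool set))"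
    using \<open>finite T\<close> by (simp add: finite_cartesian_product)
  ultimately show ?thesis using finite_subset by blast
qed


end

lemma ev_prob:
  assumes "0 \<le> p" "p \<le> 1"
  shows "gp p (all_edges n) (Ev n T xs) \<le> max p (1-p) ^ card (Iset T (length xs))"
proof (cases "valid n T xs")
  case False
  then have "gp p (all_edges n) (Ev n T xs) = 0" unfolding gp_def Ev_def by simp
  then show ?thesis using assms by simp
next
  case True
  interpret vcert n T xs by unfold_locales (rule True)
  have finA: "finite (all_edges n)"
  proof -
    have "all_edges n \<subseteq> Pow {..<n}" unfolding all_edges_def by auto
    then show ?thesis by (rule finite_subset) simp
  qed
  have "gp p (all_edges n) (Ev n T xs) \<le> gp p (all_edges n) (\<lambda>E. \<forall>d\<in>Iset T k. Pc n xs d E)"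
    by (rule gp_mono) (use assms in \<open>auto simp: Ev_def\<close>)
  also have "\<dots> \<le> max p (1-p) ^ card (Iset T k)"
    by (rule gp_iter[where piv=piv]) (use finA finite_Iset assms piv_edge piv_excl piv_insens in auto)
  finally show ?thesis .
qed


lemma denom_int: "of_int (snd (quotient_of r)) * r \<in> \<int>"
proof -
  obtain a b where ab: "quotient_of r = (a,b)" by (cases "quotient_of r") auto
  have "b > 0" using quotient_of_denom_pos[OF ab] .
  have "r = of_int a / of_int b" using quotient_of_div[OF ab] .
  then have "of_int b * r = of_int a" using \<open>b > 0\<close> by simp
  then show ?thesis using ab by simp
qed

lemma level_exists: "\<exists>L>0. \<forall>i<n. \<forall>j<n. of_nat L * (Q::rat mat) $$ (i,j) \<in> \<int>"
proof -
  let ?d = "\<lambda>ij. nat (snd (quotient_of (Q $$ ij)))"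
  define L where "L = (\<Prod>ij\<in>{..<n}\<times>{..<n}. ?d ij)"
  have dpos: "?d ij > 0" for ij using quotient_of_denom_pos'[of "Q $$ ij"] by simp
  have "L > 0" unfolding L_def using dpos by (simp add: prod_pos)
  moreover have "of_nat L * Q $$ (i,j) \<in> \<int>" if "i<n" "j<n" for i j
  proof -
    have "?d (i,j) dvd L" unfolding L_def by (rule dvd_prodI) (use that in auto)
    then obtain c where c: "L = ?d (i,j) * c" by (auto elim: dvdE)
    have "of_nat (?d (i,j)) = (of_int (snd (quotient_of (Q $$ (i,j)))) :: rat)"
      using quotient_of_denom_pos'[of "Q $$ (i,j)"] by simp
    then have "of_nat L * Q $$ (i,j) = of_nat c * (of_int (snd (quotient_of (Q $$ (i,j)))) * Q $$ (i,j))"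
      unfolding c by (simp add: algebra_simps)
    also have "\<dots> \<in> \<int>" by (rule Ints_mult[OF Ints_of_nat denom_int])
    finally show ?thesis .
  qed
  ultimately show ?thesis by blast
qed

lemma level_int:
  assumes "level n Q = l'" "l' dvd l" "l > 0"
  shows "\<And>i j. i<n \<Longrightarrow> j<n \<Longrightarrow> of_nat l * Q $$ (i,j) \<in> \<int>"
proof -
  fix i j assume ij: "i<n" "j<n"
  have "level n Q > 0 \<and> (\<forall>i<n. \<forall>j<n. of_nat (level n Q) * Q $$ (i, j) \<in> \<int>)"
    unfolding level_def by (rule LeastI_ex) (rule level_exists)
  then have h: "of_nat l' * Q $$ (i,j) \<in> \<int>" using assms(1) ij by auto
  obtain c where c: "l = l' * c" using assms(2) by (auto elim: dvdE)
  have "of_nat l * Q $$ (i,j) = of_nat c * (of_nat l' * Q $$ (i,j))" unfolding c by (simp add: algebra_simps)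
  also have "\<dots> \<in> \<int>" by (rule Ints_mult[OF Ints_of_nat h])
  finally show "of_nat l * Q $$ (i,j) \<in> \<int>" .
qed

definition X0 :: "nat \<Rightarrow> rat set" where "X0 l = (\<lambda>a. of_int a / of_nat l) ` {-int l..int l}"

definition Xs :: "nat \<Rightarrow> nat \<Rightarrow> (nat \<Rightarrow> rat) set" where
  "Xs n l = {x. (\<forall>u. x u \<noteq> 0 \<longrightarrow> u < n) \<and> (\<forall>u. x u \<in> X0 l) \<and> card (supp_of x) \<le> l^2}"

definition kk :: "nat \<Rightarrow> nat \<Rightarrow> nat" where "kk l m = (m + l^4 - 1) div l^4"

lemma kk_le: "l > 0 \<Longrightarrow> m \<le> l^2*l^2*c \<Longrightarrow> kk l m \<le> c"
proof -
  assume l: "l > 0" and m: "m \<le> l^2*l^2*c"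
  have G: "l^2*l^2 = l^4" by (simp add: power_add[symmetric])
  have "l^4 > 0" using l by simp
  have m2: "m \<le> c * l^4" using m G by (simp add: algebra_simps)
  have "m + l^4 - 1 < (c+1) * l^4"
  proof -
    have "m + l^4 - 1 < c * l^4 + l^4" using m2 \<open>l^4 > 0\<close> by linarith
    then show ?thesis by (simp add: algebra_simps)
  qed
  then have "(m + l^4 - 1) div l^4 < c + 1" by (rule less_mult_imp_div_less)
  then show ?thesis unfolding kk_def by simp
qed


lemma mate_cert:
  assumes l: "l > 0" and EG: "E \<in> graphs n" and M: "cospectral_mate_level n E F l'" and dv: "l' dvd l"
  shows "\<exists>T xs. T \<subseteq> {..<n} \<and> T \<noteq> {..<n} \<and> length xs = kk l (n - card T) \<and> set xs \<subseteq> Xs n l \<and> Ev n T xs E"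
proof -
  obtain Q where FG: "F \<in> graphs n" and noiso: "\<not> graph_iso n E F" and QO: "rat_orthogonal n Q"
    and lev: "level n Q = l'" and eq: "transpose_mat Q * adj_mat n E * Q = adj_mat n F"
    using M unfolding cospectral_mate_level_def by blast
  define q where "q i j = Q $$ (i,j)" for i j
  note mf = mat_facts[OF QO eq, folded q_def]
  interpret O: orth n l q
  proof
    show "\<And>j k. j<n \<Longrightarrow> k<n \<Longrightarrow> (\<Sum>a<n. q a j * q a k) = (if j=k then 1 else 0)" using mf(1) by blast
    show "\<And>i j. i<n \<Longrightarrow> j<n \<Longrightarrow> (\<Sum>b<n. q i b * q j b) = (if i=j then 1 else 0)" using mf(2) by blast
    show "\<And>i j. i<n \<Longrightarrow> j<n \<Longrightarrow> of_nat l * q i j \<in> \<int>" unfolding q_def using level_int[OF lev dv l] by blast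
    show "l > 0" using l .
  qed
  have adj: "\<And>j k. j<n \<Longrightarrow> k<n \<Longrightarrow> (\<Sum>a<n. \<Sum>b<n. q a j * (if {a,b}\<in>E then 1 else 0) * q b k) = (if {j,k}\<in>F then 1 else 0)"
    using mf(3) by blast
  define T where "T = O.TR"
  have TS: "T \<subseteq> {..<n}" unfolding T_def O.TR_def by auto
  have Tne: "T \<noteq> {..<n}"
  proof
    assume "T = {..<n}"
    then have "graph_iso n E F" using O.all_triv_iso[OF adj EG FG] unfolding T_def by blast
    then show False using noiso by simp
  qed
  obtain J where J: "J \<subseteq> O.NC" "\<forall>i\<in>J. \<forall>j\<in>J. i \<noteq> j \<longrightarrow> O.supp i \<inter> O.supp j = {}"
     "n - card O.TR \<le> l^2*l^2*card J"
    using O.greedy_cols[OF greedy_disjoint] by blast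
  define k where "k = kk l (n - card T)"
  have kJ: "k \<le> card J" unfolding k_def T_def by (rule kk_le[OF l J(3)])
  obtain J' where J': "J' \<subseteq> J" "card J' = k" "finite J'" using obtain_subset_with_card_n[OF kJ] by blast
  define cs where "cs = sorted_list_of_set J'"
  have cs: "length cs = k" "distinct cs" "set cs = J'" unfolding cs_def using J' by auto
  define col where "col c = (\<lambda>u. if u<n then q u c else 0)" for c
  define xs where "xs = map col cs"
  have csNC: "c \<in> O.NC" if "c \<in> set cs" for c using that cs J' J by auto
  have cn: "c < n" if "c \<in> set cs" for c using csNC[OF that] unfolding O.NC_def by auto
  have supp_col: "supp_of (col c) = O.supp c" for c unfolding supp_of_def O.supp_def col_def by auto
  have len: "length xs = k" unfolding xs_def using cs by simp
  have inXs: "set xs \<subseteq> Xs n l"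
  proof
    fix x assume "x \<in> set xs"
    then obtain c where c: "c \<in> set cs" "x = col c" unfolding xs_def by auto
    have "x u \<in> X0 l" for u
    proof (cases "u < n")
      case True
      obtain z where z: "of_nat l * q u c = of_int z" using O.integ[OF True cn[OF c(1)]] by (auto elim: Ints_cases)
      have "\<bar>q u c\<bar> \<le> 1" using O.abs_le1 True cn[OF c(1)] by auto
      then have "\<bar>of_nat l * q u c\<bar> \<le> of_nat l" using l by (simp add: abs_mult mult_left_le)
      then have "\<bar>z\<bar> \<le> int l" using z by (metis of_int_abs of_int_le_iff of_int_of_nat_eq)
      moreover have "x u = of_int z / of_nat l" using z c True l unfolding col_def by (simp add: field_simps)
      ultimately show ?thesis unfolding X0_def by (intro rev_image_eqI[of z]) auto
    next
      case False
      then have "x u = of_int 0 / of_nat l" using c unfolding col_def by simp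
      then show ?thesis unfolding X0_def by force
    qed
    moreover have "card (supp_of x) \<le> l^2" using c supp_col O.col_supp_card cn unfolding O.supp_def by auto
    ultimately show "x \<in> Xs n l" unfolding Xs_def using c col_def by auto
  qed
  have valid: "valid n T xs"
    unfolding valid_def
  proof (intro conjI)
    show "T \<subseteq> {..<n}" by (rule TS)
    show "\<forall>x\<in>set xs. supp_of x \<subseteq> {..<n} - T \<and> supp_of x \<noteq> {} \<and> (\<forall>u. \<bar>x u\<bar> < 1)"
    proof
      fix x assume "x \<in> set xs"
      then obtain c where c: "c \<in> set cs" "x = col c" unfolding xs_def by auto
      have "supp_of x \<subseteq> {..<n} - T" using O.NC_supp_TR[OF csNC[OF c(1)]] c supp_col unfolding T_def O.supp_def by auto
      moreover have "supp_of x \<noteq> {}" using O.supp_ne[OF cn[OF c(1)]] c supp_col by simp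
      moreover have "\<forall>u. \<bar>x u\<bar> < 1" using O.NC_lt1[OF csNC[OF c(1)]] c unfolding col_def by auto
      ultimately show "supp_of x \<subseteq> {..<n} - T \<and> supp_of x \<noteq> {} \<and> (\<forall>u. \<bar>x u\<bar> < 1)" by blast
    qed
    show "\<forall>i<length xs. \<forall>j<length xs. i \<noteq> j \<longrightarrow> supp_of (xs!i) \<inter> supp_of (xs!j) = {}"
    proof (intro allI impI)
      fix i j assume ij: "i < length xs" "j < length xs" "i \<noteq> j"
      then have "cs!i \<noteq> cs!j" "cs!i \<in> J" "cs!j \<in> J" using cs J' len by (auto simp: nth_eq_iff_index_eq)
      then show "supp_of (xs!i) \<inter> supp_of (xs!j) = {}" using J(2) ij supp_col len cs unfolding xs_def by auto
    qed
  qed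
  have pc: "pcond n (col c) (col c') E" if "c<n" "c'<n" for c c'
  proof -
    have "(\<Sum>a<n. \<Sum>b<n. col c a * (if {a,b}\<in>E then 1 else 0) * col c' b) =
          (\<Sum>a<n. \<Sum>b<n. q a c * (if {a,b}\<in>E then 1 else 0) * q b c')"
      unfolding col_def by (intro sum.cong refl) auto
    also have "\<dots> = (if {c,c'}\<in>F then 1 else 0)" using adj that by blast
    finally show ?thesis unfolding pcond_def by simp
  qed
  have wc: "wcond n (col c) w E" if cw: "c<n" "w\<in>T" for c w
  proof -
    obtain c0 where c0: "c0 < n" "\<bar>q w c0\<bar> = 1" "w < n" using cw(2) unfolding T_def O.TR_def by auto
    let ?S = "(\<Sum>b<n. (if {w,b}\<in>E then 1 else 0) * q b c)"
    have "(\<Sum>a<n. \<Sum>b<n. q a c0 * (if {a,b}\<in>E then 1 else 0) * q b c) =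
          (\<Sum>b<n. q w c0 * (if {w,b}\<in>E then 1 else 0) * q b c)"
      by (rule sum_one) (use c0 O.triv_col[OF c0(3,1,2)] in auto)
    also have "\<dots> = q w c0 * ?S" by (simp add: sum_distrib_left algebra_simps)
    finally have e1: "q w c0 * ?S = (if {c0,c}\<in>F then 1 else 0)" using adj[OF c0(1) cw(1)] by simp
    have qq: "q w c0 * q w c0 = 1" using c0(2) abs_mult_self_eq[of "q w c0"] by simp
    have "?S = (q w c0 * q w c0) * ?S" using qq by simp
    also have "\<dots> = q w c0 * (q w c0 * ?S)" by (simp only: mult.assoc)
    also have "\<dots> = q w c0 * (if {c0,c}\<in>F then 1 else 0)" using e1 by simp
    finally have "?S = q w c0 * (if {c0,c}\<in>F then 1 else 0)" .
    moreover have "q w c0 \<in> \<int>" using c0(2) by (cases "q w c0 \<ge> 0") (auto simp: abs_if Ints_minus)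
    ultimately have "?S \<in> \<int>" by simp
    moreover have "(\<Sum>u<n. if {w,u}\<in>E then col c u else 0) = ?S" unfolding col_def by (rule sum.cong) auto
    ultimately show ?thesis unfolding wcond_def by simp
  qed
  have conds: "\<forall>d\<in>Iset T (length xs). Pc n xs d E"
  proof
    fix d assume "d \<in> Iset T (length xs)"
    then consider (W) i w where "d = (i,w,True)" "i < length xs" "w \<in> T"
      | (P) i j where "d = (i,j,False)" "i < length xs div 2" "length xs div 2 \<le> j" "j < length xs"
      unfolding Iset_def by blast
    then show "Pc n xs d E"
    proof cases
      case W
      have "cs!i \<in> set cs" using W len cs(1) by (metis nth_mem)
      then show ?thesis using W wc cn len cs unfolding xs_def by simp
    next
      case P
      have "i < length cs" "j < length cs" using P len cs(1) by auto
      then have "cs!i \<in> set cs" "cs!j \<in> set cs" by (metis nth_mem)+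
      then show ?thesis using P pc cn len cs unfolding xs_def by simp
    qed
  qed
  have "Ev n T xs E" unfolding Ev_def using valid conds by simp
  then show ?thesis using TS Tne len inXs unfolding k_def by blast
qed


lemma gnp_gp: "Gnp_prob n p P = gp p (all_edges n) P"
  unfolding Gnp_prob_def gp_def graphs_def by simp

lemma finite_all_edges: "finite (all_edges n)"
proof -
  have "all_edges n \<subseteq> Pow {..<n}" unfolding all_edges_def by auto
  then show ?thesis by (rule finite_subset) simp
qed

lemma sum_pow_card: "finite A \<Longrightarrow> (\<Sum>T\<in>Pow A. (x::real) ^ card (A - T)) = (1+x)^card A"
proof (induction A rule: finite_induct)
  case empty then show ?case by simp
next
  case (insert a A)
  have disj: "Pow A \<inter> insert a ` Pow A = {}" using insert.hyps(2) by auto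
  have inj: "inj_on (insert a) (Pow A)"
  proof (rule inj_onI)
    fix x y assume "x \<in> Pow A" "y \<in> Pow A" "insert a x = insert a y"
    then show "x = y" using insert.hyps(2) by (metis Pow_iff insert_ident subset_eq)
  qed
  have c1: "card (insert a A - T) = Suc (card (A - T))" if "T \<in> Pow A" for T
  proof -
    have "insert a A - T = insert a (A - T)" using that insert.hyps(2) by auto
    then show ?thesis using insert.hyps by simp
  qed
  have c2: "card (insert a A - insert a T) = card (A - T)" if "T \<in> Pow A" for T
  proof -
    have "insert a A - insert a T = A - T" using that insert.hyps(2) by auto
    then show ?thesis by simp
  qed
  have "(\<Sum>T\<in>Pow (insert a A). x ^ card (insert a A - T)) =
        (\<Sum>T\<in>Pow A. x ^ card (insert a A - T)) + (\<Sum>T\<in>insert a ` Pow A. x ^ card (insert a A - T))"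
    unfolding Pow_insert by (rule sum.union_disjoint) (use insert.hyps disj in auto)
  also have "(\<Sum>T\<in>insert a ` Pow A. x ^ card (insert a A - T)) = (\<Sum>T\<in>Pow A. x ^ card (insert a A - insert a T))"
    by (rule sum.reindex[OF inj, unfolded comp_def])
  also have "\<dots> = (\<Sum>T\<in>Pow A. x ^ card (A - T))" by (rule sum.cong) (use c2 in auto)
  also have "(\<Sum>T\<in>Pow A. x ^ card (insert a A - T)) = x * (\<Sum>T\<in>Pow A. x ^ card (A - T))"
    by (simp add: sum_distrib_left c1)
  finally show ?case using insert by (simp add: algebra_simps)
qed

definition build :: "(nat \<times> rat) list \<Rightarrow> nat \<Rightarrow> rat" where
  "build ps u = (case map_of ps u of Some v \<Rightarrow> v | None \<Rightarrow> 0)"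

lemma map_of_replicate: "map_of (replicate j (a, b)) u = (if u = a \<and> j > 0 then Some b else None)"
  by (induction j) auto

lemma finite_X0: "finite (X0 l)" unfolding X0_def by simp

lemma card_X0: "card (X0 l) \<le> 2*l+1"
proof -
  have "card (X0 l) \<le> card {-int l..int l}" unfolding X0_def by (rule card_image_le) simp
  also have "\<dots> = 2*l+1" by simp
  finally show ?thesis .
qed

lemma Xs_build:
  assumes "n \<ge> 1"
  shows "Xs n l \<subseteq> build ` {ps. set ps \<subseteq> {..<n} \<times> X0 l \<and> length ps = l^2}"
proof
  fix x assume x: "x \<in> Xs n l"
  define S where "S = supp_of x"
  have Sn: "S \<subseteq> {..<n}" using x unfolding Xs_def S_def supp_of_def by auto
  then have finS: "finite S" using finite_subset by blast
  have cS: "card S \<le> l^2" using x unfolding Xs_def S_def by auto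
  define ps where "ps = map (\<lambda>u. (u, x u)) (sorted_list_of_set S) @ replicate (l^2 - card S) (0, x 0)"
  have "length ps = l^2" unfolding ps_def using cS finS by simp
  moreover have "set ps \<subseteq> {..<n} \<times> X0 l"
  proof -
    have "\<forall>u. x u \<in> X0 l" using x unfolding Xs_def by auto
    then show ?thesis unfolding ps_def using Sn finS assms by auto
  qed
  moreover have "build ps = x"
  proof
    fix u
    show "build ps u = x u"
    proof (cases "u \<in> S")
      case True
      then show ?thesis using finS unfolding build_def ps_def
        by (simp add: map_of_append map_add_def map_of_map_restrict restrict_map_def)
    next
      case False
      then have xu: "x u = 0" unfolding S_def supp_of_def by auto
      have "map_of (map (\<lambda>u. (u, x u)) (sorted_list_of_set S)) u = None"
        using False finS by (simp add: map_of_map_restrict restrict_map_def)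
      then have "build ps u = (case map_of (replicate (l^2 - card S) (0, x 0)) u of Some v \<Rightarrow> v | None \<Rightarrow> 0)"
        unfolding build_def ps_def by (simp add: map_of_append map_add_def)
      also have "\<dots> = 0" using xu by (cases "u = 0") (auto simp: map_of_replicate)
      finally show ?thesis using xu by simp
    qed
  qed
  ultimately show "x \<in> build ` {ps. set ps \<subseteq> {..<n} \<times> X0 l \<and> length ps = l^2}" by blast
qed

lemma Xs_finite_card:
  assumes "n \<ge> 1"
  shows "finite (Xs n l) \<and> card (Xs n l) \<le> (n*(2*l+1))^(l^2)"
proof -
  let ?LS = "{ps. set ps \<subseteq> {..<n} \<times> X0 l \<and> length ps = l^2}"
  have fA: "finite ({..<n} \<times> X0 l)" using finite_X0 by simp
  have fLS: "finite ?LS" using finite_lists_length_eq[OF fA] .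
  have "finite (Xs n l)" using Xs_build[OF assms] fLS finite_subset by blast
  moreover have "card (Xs n l) \<le> card (build ` ?LS)"
    by (rule card_mono) (use fLS Xs_build[OF assms] in auto)
  moreover have "card (build ` ?LS) \<le> card ?LS" by (rule card_image_le[OF fLS])
  moreover have "card ?LS = (n * card (X0 l))^(l^2)"
    using card_lists_length_eq[OF fA] by (simp add: card_cartesian_product)
  moreover have "(n * card (X0 l))^(l^2) \<le> (n*(2*l+1))^(l^2)"
    by (intro power_mono mult_le_mono2 card_X0) simp
  ultimately show ?thesis by linarith
qed

lemma kk_ge: "l > 0 \<Longrightarrow> m \<le> l^4 * kk l m"
proof -
  assume "l > 0"
  then have G: "l^4 > 0" by simp
  let ?G = "l^4"
  have "(m + ?G - 1) = ?G * ((m + ?G - 1) div ?G) + (m + ?G - 1) mod ?G" by simp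
  moreover have "(m + ?G - 1) mod ?G < ?G" using G by simp
  ultimately show ?thesis unfolding kk_def by linarith
qed

lemma kk_pos: "l > 0 \<Longrightarrow> m \<ge> 1 \<Longrightarrow> kk l m \<ge> 1"
proof -
  assume "l > 0" "m \<ge> 1"
  then have G: "l^4 > 0" by simp
  have "l^4 \<le> m + l^4 - 1" using \<open>m \<ge> 1\<close> by simp
  then have "l^4 div l^4 \<le> (m + l^4 - 1) div l^4" by (rule div_le_mono)
  then show ?thesis unfolding kk_def using G by simp
qed

lemma exp_bound:
  fixes n m k t G :: nat
  assumes "t + m = n" "m \<le> G * k" "G > 0"
  shows "k * (n div (8*G)) \<le> k * t + (k div 2) * (k - k div 2)"
proof (cases "2*m \<le> n")
  case True
  have "n div (8*G) \<le> n div 8" using assms(3) by (simp add: div_le_mono2)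
  also have "\<dots> \<le> t" using True assms(1) by linarith
  finally have "k * (n div (8*G)) \<le> k * t" by simp
  then show ?thesis by linarith
next
  case False
  let ?M = "n div (8*G)"
  let ?h = "k div 2"
  have "8*G*?M \<le> n" by (metis div_mult_self1_is_m div_times_less_eq_dividend mult.commute)
  then have "4*G*?M < G*k" using False assms(2) by linarith
  then have "4*?M < k" using assms(3) by (metis mult.assoc mult.commute mult_less_cancel1)
  then have h2: "2*?M \<le> ?h" by linarith
  have kh: "k \<le> 2*(k - ?h)" by linarith
  have "k * ?M \<le> 2*(k - ?h) * ?M" using kh by simp
  also have "\<dots> = (2*?M) * (k - ?h)" by simp
  also have "\<dots> \<le> ?h * (k - ?h)" using h2 by (rule mult_right_mono) simp
  finally show ?thesis by linarith
qed

lemma term_bound: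
  fixes n m k G e M :: nat and r N z :: real
  assumes "n \<ge> 1" "m \<le> G*k" "k \<ge> 1" "0 \<le> r" "r \<le> 1" "0 \<le> N" "k * M \<le> e"
    "z = real n ^ G * N * r ^ M" "z \<le> 1"
  shows "N^k * r^e \<le> z * (1/real n)^m"
proof -
  have z0: "0 \<le> z" using assms by simp
  have "real n ^ m * (N^k * r^e) \<le> (real n ^ G)^k * (N^k * (r^M)^k)"
  proof (rule mult_mono)
    show "real n ^ m \<le> (real n ^ G)^k"
      unfolding power_mult[symmetric] using assms(1,2) by (intro power_increasing) auto
    have "r^e \<le> r^(M*k)" using assms(4,5,7) by (intro power_decreasing) (auto simp: mult.commute)
    then show "N^k * r^e \<le> N^k * (r^M)^k" using assms(6) by (simp add: power_mult mult_left_mono)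
  qed (use assms in auto)
  also have "\<dots> = z^k" using assms(8) by (simp add: power_mult_distrib)
  also have "\<dots> \<le> z" using z0 assms(9) assms(3) by (simp add: power_le_one_iff power_decreasing[of 1 k z, simplified])
  finally have "real n ^ m * (N^k * r^e) \<le> z" .
  moreover have "real n ^ m > 0" using assms(1) by simp
  ultimately show ?thesis by (simp add: field_simps power_one_over)
qed


lemma one_plus_pow_le: "n \<ge> 1 \<Longrightarrow> (1 + 1/real n)^n \<le> exp 1"
proof -
  assume n: "n \<ge> 1"
  have "(1 + 1/real n)^n \<le> exp (1/real n)^n"
    by (rule power_mono) (auto simp: exp_ge_add_one_self)
  also have "\<dots> = exp (real n * (1/real n))" by (rule exp_of_nat_mult[symmetric])
  also have "\<dots> = exp 1" using n by simp
  finally show ?thesis .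
qed

lemma bound_main:
  fixes p :: real and l n :: nat
  defines "r \<equiv> max p (1-p)"
  defines "z \<equiv> real n ^ (l^4) * (real (n*(2*l+1)))^(l^2) * r ^ (n div (8*l^4))"
  assumes p: "0 < p" "p < 1" and l: "l > 0" and n: "n \<ge> 1" and z1: "z \<le> 1"
  shows "Gnp_prob n p (\<lambda>E. \<exists>F l'. l' dvd l \<and> cospectral_mate_level n E F l') \<le> z * exp 1"
proof -
  let ?A = "all_edges n"
  let ?P = "\<lambda>E. \<exists>F l'. l' dvd l \<and> cospectral_mate_level n E F l'"
  define TT where "TT = {T. T \<subseteq> {..<n} \<and> T \<noteq> {..<n}}"
  define LL where "LL (T::nat set) = {xs. set xs \<subseteq> Xs n l \<and> length xs = kk l (n - card T)}" for T
  define Cn where "Cn = Sigma TT LL"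
  have XF: "finite (Xs n l)" "card (Xs n l) \<le> (n*(2*l+1))^(l^2)" using Xs_finite_card[OF n] by auto
  have finTT: "finite TT" unfolding TT_def by (rule finite_subset[of _ "Pow {..<n}"]) auto
  have finLL: "finite (LL T)" for T unfolding LL_def by (rule finite_lists_length_eq[OF XF(1)])
  have finCn: "finite Cn" unfolding Cn_def using finTT finLL by (intro finite_SigmaI) auto
  have p01: "0 \<le> p" "p \<le> 1" using p by auto
  have r01: "0 \<le> r" "r \<le> 1" unfolding r_def using p by auto
  have "Gnp_prob n p ?P = gp p ?A ?P" by (rule gnp_gp)
  also have "\<dots> \<le> gp p ?A (\<lambda>E. \<exists>c\<in>Cn. Ev n (fst c) (snd c) E)"
  proof (rule gp_mono[OF p01])
    fix E assume EA: "E \<subseteq> ?A" and PE: "?P E"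
    then obtain F l' where FL: "l' dvd l" "cospectral_mate_level n E F l'" by blast
    have EG: "E \<in> graphs n" using EA unfolding graphs_def by simp
    obtain T xs where "T \<subseteq> {..<n}" "T \<noteq> {..<n}" "length xs = kk l (n - card T)"
      "set xs \<subseteq> Xs n l" "Ev n T xs E"
      using mate_cert[OF l EG FL(2) FL(1)] by blast
    then have "(T,xs) \<in> Cn" "Ev n (fst (T,xs)) (snd (T,xs)) E" unfolding Cn_def TT_def LL_def by auto
    then show "\<exists>c\<in>Cn. Ev n (fst c) (snd c) E" by blast
  qed
  also have "\<dots> \<le> (\<Sum>c\<in>Cn. gp p ?A (Ev n (fst c) (snd c)))"
    by (rule gp_union[OF finCn p01])
  also have "\<dots> \<le> (\<Sum>c\<in>Cn. r ^ card (Iset (fst c) (length (snd c))))"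
    by (rule sum_mono) (unfold r_def, rule ev_prob[OF p01])
  also have "\<dots> = (\<Sum>T\<in>TT. \<Sum>xs\<in>LL T. r ^ card (Iset T (length xs)))"
    unfolding Cn_def by (subst sum.Sigma[OF finTT]) (use finLL in \<open>auto simp: case_prod_beta\<close>)
  also have "\<dots> \<le> (\<Sum>T\<in>TT. z * (1/real n) ^ card ({..<n} - T))"
  proof (rule sum_mono)
    fix T assume T: "T \<in> TT"
    define k where "k = kk l (n - card T)"
    have TS: "T \<subseteq> {..<n}" "T \<noteq> {..<n}" using T unfolding TT_def by auto
    have finT: "finite T" using TS finite_subset by blast
    have cT: "card T < n" using TS by (metis card_lessThan card_seteq finite_lessThan not_le)
    have cD: "card ({..<n} - T) = n - card T" using TS finT by (simp add: card_Diff_subset)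
    have "(\<Sum>xs\<in>LL T. r ^ card (Iset T (length xs))) = (\<Sum>xs\<in>LL T. r ^ card (Iset T k))"
      by (rule sum.cong) (auto simp: LL_def k_def)
    also have "\<dots> = real (card (LL T)) * r ^ card (Iset T k)" by simp
    also have "card (LL T) = card (Xs n l) ^ k" unfolding LL_def k_def by (rule card_lists_length_eq[OF XF(1)])
    also have "real (card (Xs n l) ^ k) \<le> (real (n*(2*l+1))^(l^2))^k"
      using XF(2) by (simp add: power_mono del: of_nat_mult of_nat_add)
    finally have s1: "(\<Sum>xs\<in>LL T. r ^ card (Iset T (length xs))) \<le> (real (n*(2*l+1))^(l^2))^k * r ^ card (Iset T k)"
      using r01 by (simp add: mult_right_mono)
    have m1: "n - card T \<ge> 1" using cT by simp
    have kge: "n - card T \<le> l^4 * k" unfolding k_def by (rule kk_ge[OF l])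
    have k1: "k \<ge> 1" unfolding k_def by (rule kk_pos[OF l m1])
    have e: "k * (n div (8*l^4)) \<le> card (Iset T k)"
      unfolding card_Iset[OF finT] by (rule exp_bound) (use cT kge l in auto)
    have "(real (n*(2*l+1))^(l^2))^k * r ^ card (Iset T k) \<le> z * (1/real n)^(n - card T)"
      by (rule term_bound[OF n kge k1 r01 _ e z_def[THEN meta_eq_to_obj_eq] z1]) simp
    then show "(\<Sum>xs\<in>LL T. r ^ card (Iset T (length xs))) \<le> z * (1/real n) ^ card ({..<n} - T)"
      using s1 cD by simp
  qed
  also have "\<dots> \<le> (\<Sum>T\<in>Pow {..<n}. z * (1/real n) ^ card ({..<n} - T))"
  proof (rule sum_mono2)
    show "TT \<subseteq> Pow {..<n}" unfolding TT_def by auto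
    have "0 \<le> z" unfolding z_def using r01 by simp
    then show "\<And>b. b \<in> Pow {..<n} - TT \<Longrightarrow> 0 \<le> z * (1 / real n) ^ card ({..<n} - b)" by simp
  qed simp
  also have "\<dots> = z * (1 + 1/real n)^n" by (simp add: sum_distrib_left[symmetric] sum_pow_card)
  also have "\<dots> \<le> z * exp 1"
  proof (rule mult_left_mono)
    show "(1 + 1/real n)^n \<le> exp 1" by (rule one_plus_pow_le[OF n])
    show "0 \<le> z" unfolding z_def using r01 by simp
  qed
  finally show ?thesis .
qed


lemma poly_geom:
  fixes \<rho> :: real
  assumes "0 < \<rho>" "\<rho> < 1"
  shows "(\<lambda>n. real n ^ K * \<rho> ^ n) \<longlonglongrightarrow> 0"
proof -
  define a where "a = - ln \<rho>"
  have a: "a > 0" unfolding a_def using assms by simp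
  have eq: "real n ^ K * \<rho> ^ n = (1 / a^K) * ((a * real n)^K / exp (a * real n))" for n
  proof -
    have "\<rho> ^ n = exp (real n * ln \<rho>)" using assms by (simp add: exp_of_nat_mult)
    also have "\<dots> = 1 / exp (a * real n)" unfolding a_def by (simp add: exp_minus field_simps)
    finally show ?thesis using a by (simp add: power_mult_distrib field_simps)
  qed
  have lim1: "filterlim (\<lambda>n. a * real n) at_top sequentially"
    by (rule filterlim_tendsto_pos_mult_at_top[OF tendsto_const a filterlim_real_sequentially])
  have "(\<lambda>n. (a * real n)^K / exp (a * real n)) \<longlonglongrightarrow> 0"
    by (rule filterlim_compose[OF tendsto_power_div_exp_0 lim1])
  then have "(\<lambda>n. (1 / a^K) * ((a * real n)^K / exp (a * real n))) \<longlonglongrightarrow> 0"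
    by (rule tendsto_mult_right_zero)
  then show ?thesis using eq by simp
qed

lemma z_lim:
  fixes p :: real and l :: nat
  assumes p: "0 < p" "p < 1" and l: "l > 0"
  shows "(\<lambda>n. real n ^ (l^4) * (real (n*(2*l+1)))^(l^2) * max p (1-p) ^ (n div (8*l^4))) \<longlonglongrightarrow> 0"
proof -
  define r where "r = max p (1-p)"
  define c where "c = 8*l^4"
  have r: "0 < r" "r < 1" unfolding r_def using p by auto
  have c: "c > 0" unfolding c_def using l by simp
  define \<rho> where "\<rho> = root c r"
  have \<rho>: "0 < \<rho>" "\<rho> < 1" unfolding \<rho>_def using r c by (auto simp: real_root_lt_1_iff)
  have \<rho>c: "\<rho> ^ c = r" unfolding \<rho>_def using r c by (simp add: real_root_pow_pos)
  have bnd: "r ^ (n div c) \<le> \<rho> ^ n / r" for n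
  proof -
    have "n = c * (n div c) + n mod c" by simp
    moreover have "n mod c < c" using c by simp
    ultimately have "n \<le> c * (n div c) + c" by linarith
    then have "\<rho> ^ (c * (n div c) + c) \<le> \<rho> ^ n" using \<rho> by (intro power_decreasing) auto
    also have "\<rho> ^ (c * (n div c) + c) = r ^ (n div c) * r" using \<rho>c by (simp add: power_add power_mult)
    finally show ?thesis using r by (simp add: field_simps)
  qed
  let ?K = "l^4 + l^2"
  let ?C = "real (2*l+1) ^ (l^2) / r"
  have le: "real n ^ (l^4) * (real (n*(2*l+1)))^(l^2) * r ^ (n div c) \<le> ?C * (real n ^ ?K * \<rho> ^ n)" for n
  proof -
    have "real n ^ (l^4) * (real (n*(2*l+1)))^(l^2) * r ^ (n div c) \<le> real n ^ (l^4) * (real (n*(2*l+1)))^(l^2) * (\<rho> ^ n / r)"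
      by (rule mult_left_mono[OF bnd]) simp
    also have "\<dots> = real n ^ (l^4) * (real n ^ (l^2) * real (2*l+1) ^ (l^2)) * (\<rho> ^ n / r)"
      by (simp only: of_nat_mult power_mult_distrib)
    also have "\<dots> = ?C * (real n ^ ?K * \<rho> ^ n)" using r by (simp add: power_add)
    finally show ?thesis .
  qed
  have lim: "(\<lambda>n. ?C * (real n ^ ?K * \<rho> ^ n)) \<longlonglongrightarrow> 0"
    by (rule tendsto_mult_right_zero[OF poly_geom[OF \<rho>]])
  have nn: "0 \<le> real n ^ (l^4) * (real (n*(2*l+1)))^(l^2) * r ^ (n div c)" for n using r by simp
  have "(\<lambda>n. real n ^ (l^4) * (real (n*(2*l+1)))^(l^2) * r ^ (n div c)) \<longlonglongrightarrow> 0"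
  proof (rule tendsto_sandwich[of "\<lambda>_. 0" _ sequentially "\<lambda>n. ?C * (real n ^ ?K * \<rho> ^ n)"])
    show "eventually (\<lambda>n. 0 \<le> real n ^ (l^4) * (real (n*(2*l+1)))^(l^2) * r ^ (n div c)) sequentially"
      by (rule always_eventually) (rule allI, rule nn)
    show "eventually (\<lambda>n. real n ^ (l^4) * (real (n*(2*l+1)))^(l^2) * r ^ (n div c) \<le> ?C * (real n ^ ?K * \<rho> ^ n)) sequentially"
      by (rule always_eventually) (rule allI, rule le)
    show "(\<lambda>n. 0) \<longlonglongrightarrow> (0::real)" by (rule tendsto_const)
    show "(\<lambda>n. ?C * (real n ^ ?K * \<rho> ^ n)) \<longlonglongrightarrow> 0" by (rule lim)
  qed
  then show ?thesis unfolding r_def c_def .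
qed

lemma gnp_mono_nonneg:
  assumes "0 < p" "p < 1" "\<And>E. P E \<Longrightarrow> R E"
  shows "0 \<le> Gnp_prob n p P \<and> Gnp_prob n p P \<le> Gnp_prob n p R"
proof
  show "0 \<le> Gnp_prob n p P" unfolding gnp_gp by (rule gp_nonneg) (use assms in auto)
  show "Gnp_prob n p P \<le> Gnp_prob n p R" unfolding gnp_gp by (rule gp_mono) (use assms in auto)
qed

theorem mainTheorem1:
  fixes p :: real and l :: nat
  assumes "0 < p" "p < 1" "l \<ge> 2"
  shows "((\<lambda>n. Gnp_prob n p (\<lambda>E. \<exists>F l'. l' dvd l \<and> cospectral_mate_level n E F l'))
            \<longlonglongrightarrow> 0) \<and>
         ((\<lambda>n. Gnp_prob n p (\<lambda>E. \<exists>F. cospectral_mate_level n E F l)) \<longlonglongrightarrow> 0) \<and>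
         ((\<lambda>n. Gnp_prob n p (\<lambda>E. \<exists>F l'. l' dvd l \<and> gen_cospectral_mate_level n E F l'))
            \<longlonglongrightarrow> 0) \<and>
         ((\<lambda>n. Gnp_prob n p (\<lambda>E. \<exists>F. gen_cospectral_mate_level n E F l)) \<longlonglongrightarrow> 0)"
proof -
  have l: "l > 0" using assms(3) by simp
  let ?P1 = "\<lambda>n E. \<exists>F l'. l' dvd l \<and> cospectral_mate_level n E F l'"
  define z where "z n = real n ^ (l^4) * (real (n*(2*l+1)))^(l^2) * max p (1-p) ^ (n div (8*l^4))" for n
  have zl: "z \<longlonglongrightarrow> 0" unfolding z_def using z_lim[OF assms(1,2) l] .
  have "eventually (\<lambda>n. z n < 1) sequentially"
    by (rule order_tendstoD(2)[OF zl]) simp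
  then have ev1: "eventually (\<lambda>n. z n \<le> 1) sequentially"
    by (rule eventually_mono) simp
  have ev2: "eventually (\<lambda>n. n \<ge> 1) sequentially" by (rule eventually_ge_at_top)
  have up: "eventually (\<lambda>n. Gnp_prob n p (?P1 n) \<le> z n * exp 1) sequentially"
    using ev1 ev2
  proof eventually_elim
    case (elim n)
    then show ?case using bound_main[OF assms(1,2) l elim(2)] unfolding z_def by simp
  qed
  have zl2: "(\<lambda>n. z n * exp 1) \<longlonglongrightarrow> 0" using tendsto_mult_left_zero[OF zl] .
  have lim_of: "(\<lambda>n. Gnp_prob n p (R n)) \<longlonglongrightarrow> 0" if RP: "\<And>n E. R n E \<Longrightarrow> ?P1 n E" for R
  proof (rule tendsto_sandwich[of "\<lambda>_. 0" _ sequentially "\<lambda>n. z n * exp 1"])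
    show "eventually (\<lambda>n. 0 \<le> Gnp_prob n p (R n)) sequentially"
      by (rule always_eventually) (use gp_nonneg[of p] assms(1,2) in \<open>auto simp: gnp_gp\<close>)
    show "eventually (\<lambda>n. Gnp_prob n p (R n) \<le> z n * exp 1) sequentially"
      using up
    proof eventually_elim
      case (elim n)
      have "Gnp_prob n p (R n) \<le> Gnp_prob n p (?P1 n)"
        using gnp_mono_nonneg[OF assms(1,2), of "R n" "?P1 n"] RP by blast
      then show ?case using elim by linarith
    qed
  qed (use zl2 in auto)
  have g: "cospectral_mate_level n E F l'" if "gen_cospectral_mate_level n E F l'" for n E F l'
    using that unfolding gen_cospectral_mate_level_def cospectral_mate_level_def by blast
  show ?thesis
  proof (intro conjI)
    show "(\<lambda>n. Gnp_prob n p (?P1 n)) \<longlonglongrightarrow> 0" by (rule lim_of)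
    show "(\<lambda>n. Gnp_prob n p (\<lambda>E. \<exists>F. cospectral_mate_level n E F l)) \<longlonglongrightarrow> 0"
    proof (rule lim_of)
      fix n E assume "\<exists>F. cospectral_mate_level n E F l"
      then obtain F where "cospectral_mate_level n E F l" by blast
      moreover have "l dvd l" by simp
      ultimately show "?P1 n E" by blast
    qed
    show "(\<lambda>n. Gnp_prob n p (\<lambda>E. \<exists>F l'. l' dvd l \<and> gen_cospectral_mate_level n E F l')) \<longlonglongrightarrow> 0"
    proof (rule lim_of)
      fix n E assume "\<exists>F l'. l' dvd l \<and> gen_cospectral_mate_level n E F l'"
      then obtain F l' where "l' dvd l" "gen_cospectral_mate_level n E F l'" by blast
      then have "l' dvd l" "cospectral_mate_level n E F l'" using g by auto
      then show "?P1 n E" by blast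
    qed
    show "(\<lambda>n. Gnp_prob n p (\<lambda>E. \<exists>F. gen_cospectral_mate_level n E F l)) \<longlonglongrightarrow> 0"
    proof (rule lim_of)
      fix n E assume "\<exists>F. gen_cospectral_mate_level n E F l"
      then obtain F where "gen_cospectral_mate_level n E F l" by blast
      then have "cospectral_mate_level n E F l" using g by auto
      moreover have "l dvd l" by simp
      ultimately show "?P1 n E" by blast
    qed
  qed
qed


end
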